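(* Let $\gamma\ge0$, $W=W_{\mathrm{dw}}+W_{\mathrm{sing}}$ with $W_{\mathrm{sing}}\in\{W_{\mathrm{sg}},I_{[-1,1]}\}$, and let (A1)–(A7) hold. Let $\mathcal K$ be a regularity weight with $\mathcal K(0,0,0,\tilde\mu)=0$ for all $\tilde\mu\in C_0^\infty(\Omega\times[0,T))$. Then every energy-variational solution $(v,S,\varphi,\mu,E)$ of type $\mathcal K$, with associated function $\beta$, satisfies $$\mu=-\Delta\varphi+W_{\mathrm{dw}}'(\varphi)+\beta,\qquad \beta\in\partial W_{\mathrm{sing}}(\varphi),$$ for a.e. $(x,t)\in\Omega\times[0,T)$.
   Context: Notation. $\Omega\subset\mathbb R^3$ is a bounded domain with $C^2$ boundary, $T\in(0,\infty]$. $\mathbb R^{3\times3}_{\mathrm{sym,Tr}}$ denotes the symmetric trace-free real $3\times 3$ matrices. For $v:\Omega\to\mathbb R^3$, $(\nabla v)_{\mathrm{sym}}=\frac12(\nabla v+\nabla v^\top)$, $(\nabla v)_{\mathrm{skw}}=\frac12(\nabla v-\nabla v^\top)$. $A:B=A_{jk}B_{jk}$; for third-order tensors $C\,\vdots\,D=C_{jkl}D_{jkl}$; $(a\otimes b)_{jk}=a_jb_k$, $(S\otimes v)_{jkl}=S_{jk}v_l$, $(\nabla S)_{jkl}=\partial_{x_l}S_{jk}$. $L^2_{\mathrm{div}}(\Omega)$ and $H^1_{0,\mathrm{div}}(\Omega)$ are the divergence-free vector fields in $L^2(\Omega)^3$ resp. $H^1_0(\Omega)^3$; $L^2_{\mathrm{sym,Tr}}(\Omega)$,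 $H^1_{\mathrm{sym,Tr}}(\Omega)$ are the $L^2$ resp. $H^1$ fields with values in $\mathbb R^{3\times3}_{\mathrm{sym,Tr}}$. $\langle\cdot,\cdot\rangle_{L^2}$ is the $L^2(\Omega)$ inner product, $\langle f,v\rangle_{H^1}$ the pairing of $H^{-1}(\Omega)^3$ with $H^1_0(\Omega)^3$. Standing assumptions. (A1) $\rho(\varphi)=\frac{\rho_1+\rho_2}{2}+\frac{\rho_2-\rho_1}{2}\varphi$ with constants $\rho_1,\rho_2>0$. (A2) $\nu\in C^0(\mathbb R)$ with $0<\nu_1\le\nu\le\nu_2$; $\eta\in C^1(\mathbb R)$ with $0\le\eta_1\le\eta\le\eta_2$ and $|\eta'|\le C$. (A3) $m\in C^1(\mathbb R)$ with $0<m_1\le m\le m_2$. (A4) $P:\Omega\times\mathbb R\times\mathbb R^{3\times 3}_{\mathrm{sym,Tr}}\to[0,\infty]$ is proper and measurable, $P(x,y,0)=0$, $(y,z)\mapsto P(x,y,z)$ is lower semicontinuous, $z\mapsto P(x,y,z)$ is convex, $y\mapsto P(x,y,z)$ is continuous; $\mathcal P(\varphi;S):=\int_\Omega P(x,\varphi(x),S(x))\,dx$. (A5) $v_0\in L^2_{\mathrm{div}}(\Omega)$, $S_0\in L^2_{\mathrm{sym,Tr}}(\Omega)$, $f\in L^2_{\mathrm{loc}}([0,T);H^{-1}(\Omega)^3)$, $\varphi_0\in H^1(\Omega)$ with $|\varphi_0|\le1$ a.e. and $|\Omega|^{-1}\int_\Omega\varphi_0\in(-1,1)$. (A6) $W_{\mathrm{dw}}\in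 C^2(\mathbb R)$, $W_{\mathrm{dw}}\ge0$, $W_{\mathrm{dw}}(\pm1)=0$ and $W_{\mathrm{dw}}>0$ elsewhere. (A7) $W_{\mathrm{sg}}\in C([-1,1])\cap C^2(-1,1)$, $W_{\mathrm{sg}}\ge0$, $W_{\mathrm{sg}}'(\varphi)\to-\infty$ as $\varphi\to-1$, $W_{\mathrm{sg}}'(\varphi)\to+\infty$ as $\varphi\to1$, $W_{\mathrm{sg}}''\ge-\kappa$ for some constant $\kappa\ge0$, and $W_{\mathrm{sg}}:=+\infty$ outside $[-1,1]$. $I_{[-1,1]}$ is $0$ on $[-1,1]$ and $+\infty$ elsewhere. Subdifferentials: $\partial W_{\mathrm{sg}}(\varphi)=\{W'_{\mathrm{sg}}(\varphi)\}$ if $|\varphi|<1$, $=\emptyset$ otherwise; $\partial I_{[-1,1]}(\varphi)=[0,\infty)$ if $\varphi=1$, $\{0\}$ if $|\varphi|<1$, $(-\infty,0]$ if $\varphi=-1$, $\emptyset$ otherwise. Energy: $\mathcal E(v,S,\varphi)=\int_\Omega\frac{\rho(\varphi)}{2}|v|^2+\frac12|S|^2+\frac12|\nabla\varphi|^2+W(\varphi)\,dx$. Test space $\mathfrak T=C^\infty_{0,\mathrm{div}}(\Omega\times[0,T))\times C^\infty_{0,\mathrm{sym,Tr}}(\Omega\times[0,T))\times C^\infty_0(\Omega\times[0,T))\times C^\infty_0(\Omega\times[0,T))$ (smooth, compactly supported in $\Omega\times[0,T)$; respectively divergence-free, symmetric trace-free matrix valued, scalar, scalar). A regularity weight is a map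 $\mathcal K$ on $\mathfrak T$ (evaluated at each time) with values in $[0,\infty)$ and $\mathcal K(0)=0$. Energy-variational solution of type $\mathcal K$ (for $\gamma\ge0$): a quintuplet $(v,S,\varphi,\mu,E)$ with $v\in L^\infty_{\mathrm{loc}}([0,T);L^2_{\mathrm{div}})\cap L^2_{\mathrm{loc}}([0,T);H^1_{0,\mathrm{div}})$, $S\in L^\infty_{\mathrm{loc}}([0,T);L^2_{\mathrm{sym,Tr}})$, $\varphi\in L^\infty_{\mathrm{loc}}([0,T);H^1)\cap L^2_{\mathrm{loc}}([0,T);H^2)$ with $|\varphi|\le1$ a.e., $\mu\in L^2_{\mathrm{loc}}([0,T);H^1)$, $E\in BV_{\mathrm{loc}}([0,T])$ with $E(t)\ge\mathcal E(v(t),S(t),\varphi(t))$ for a.e. $t$, together with a function $\beta$ with $\beta(x,t)\in\partial W_{\mathrm{sing}}(\varphi(x,t))$ a.e., such that, writing $\rho=\rho(\varphi)$ and $J=-\frac{\rho_2-\rho_1}{2}m(\varphi)\nabla\mu$, $$\Big(E-\langle\rho v,\tilde v\rangle_{L^2}-\langle S,\tilde S\rangle_{L^2}-\langle\varphi,\tilde\varphi\rangle_{L^2}\Big)\Big|_s^t+\int_s^t\!\!\int_\Omega 2\nu(\varphi)|(\nabla v)_{\mathrm{sym}}|^2+\gamma|\nabla S|^2+m(\varphi)|\nabla\mu|^2\,dx\,d\tau+\int_s^t\mathcal P(\varphi;S)-\mathcal P(\varphi;\tilde S)\,d\tau$$ $$+\int_s^t\!\!\int_\Omega\rho v\cdot\partial_t\tilde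 v+\rho v\otimes v:\nabla\tilde v+v\otimes J:\nabla\tilde v-2\nu(\varphi)(\nabla v)_{\mathrm{sym}}:(\nabla\tilde v)_{\mathrm{sym}}-\eta(\varphi)S:(\nabla\tilde v)_{\mathrm{sym}}+\nabla\varphi\otimes\nabla\varphi:\nabla\tilde v\,dx\,d\tau$$ $$+\int_s^t\!\!\int_\Omega S:\partial_t\tilde S+S\otimes v\,\vdots\,\nabla\tilde S-\big(S(\nabla v)_{\mathrm{skw}}-(\nabla v)_{\mathrm{skw}}S\big):\tilde S-\gamma\nabla S\,\vdots\,\nabla\tilde S+\eta(\varphi)(\nabla v)_{\mathrm{sym}}:\tilde S\,dx\,d\tau$$ $$+\int_s^t\!\!\int_\Omega\varphi\,\partial_t\tilde\varphi-(v\cdot\nabla\varphi)\tilde\varphi-m(\varphi)\nabla\mu\cdot\nabla\tilde\varphi\,dx\,d\tau-\int_s^t\!\!\int_\Omega\big(\mu-(-\Delta\varphi+W_{\mathrm{dw}}'(\varphi)+\beta)\big)\tilde\mu\,dx\,d\tau$$ $$\le\int_s^t\mathcal K(\tilde v,\tilde S,\tilde\varphi,\tilde\mu)\big(E-\mathcal E(v,S,\varphi)\big)\,d\tau+\int_s^t\langle f,v-\tilde v\rangle_{H^1}\,d\tau$$ for all $(\tilde v,\tilde S,\tilde\varphi,\tilde\mu)\in\mathfrak T$ and a.e. $s<t$ in $(0,T)$, including $s=0$ with $(v(0),S(0),\varphi(0))=(v_0,S_0,\varphi_0)$. *)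

theory Defs
  imports "HOL-Analysis.Analysis"
begin

definition dd :: "'a::real_normed_vector \<Rightarrow> ('a \<Rightarrow> 'b::real_normed_vector) \<Rightarrow> 'a \<Rightarrow> 'b" where
  "dd w f x = vector_derivative (\<lambda>h. f (x + h *\<^sub>R w)) (at 0)"

fun iter_dd :: "'a::real_normed_vector list \<Rightarrow> ('a \<Rightarrow> 'b::real_normed_vector) \<Rightarrow> 'a \<Rightarrow> 'b" where
  "iter_dd [] f = f"
| "iter_dd (w # ws) f = dd w (iter_dd ws f)"

definition Ck :: "nat \<Rightarrow> ('a::euclidean_space \<Rightarrow> 'b::euclidean_space) \<Rightarrow> bool" where
  "Ck k f \<longleftrightarrow>
     (\<forall>ws. set ws \<subseteq> Basis \<and> length ws < k \<longrightarrow> iter_dd ws f differentiable_on UNIV) \<and>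
     (\<forall>ws. set ws \<subseteq> Basis \<and> length ws = k \<longrightarrow> continuous_on UNIV (iter_dd ws f))"

definition C_inf :: "('a::euclidean_space \<Rightarrow> 'b::euclidean_space) \<Rightarrow> bool" where
  "C_inf f \<longleftrightarrow> (\<forall>k. Ck k f)"

definition C2_boundary :: "(real^3) set \<Rightarrow> bool" where
  "C2_boundary \<Omega> \<longleftrightarrow>
     (\<forall>x0\<in>frontier \<Omega>. \<exists>r>0. \<exists>Q g.
        orthogonal_transformation Q \<and> Ck 2 (g :: real^2 \<Rightarrow> real) \<and>
        (\<forall>x\<in>ball x0 r. x \<in> \<Omega> \<longleftrightarrow>
            (Q (x - x0)) $ 3 > g (\<chi> i. (Q (x - x0)) $ (if i = (1::2) then (1::3) else 2))))"

definition bounded_C2_domain :: "(real^3) set \<Rightarrow> bool" where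
  "bounded_C2_domain \<Omega> \<longleftrightarrow> open \<Omega> \<and> connected \<Omega> \<and> \<Omega> \<noteq> {} \<and> bounded \<Omega> \<and> C2_boundary \<Omega>"

definition outer :: "real^3 \<Rightarrow> real^3 \<Rightarrow> real^3^3" where
  "outer a b = (\<chi> j k. a $ j * b $ k)"

definition outer3 :: "real^3^3 \<Rightarrow> real^3 \<Rightarrow> real^3^3^3" where
  "outer3 A b = (\<chi> j k l. A $ j $ k * b $ l)"

definition symp :: "real^3^3 \<Rightarrow> real^3^3" where
  "symp A = (1/2) *\<^sub>R (A + transpose A)"

definition skwp :: "real^3^3 \<Rightarrow> real^3^3" where
  "skwp A = (1/2) *\<^sub>R (A - transpose A)"

definition symTr :: "real^3^3 \<Rightarrow> bool" where
  "symTr A \<longleftrightarrow> transpose A = A \<and> trace A = 0"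

definition cpd :: "(real^3 \<Rightarrow> 'b::real_normed_vector) \<Rightarrow> 3 \<Rightarrow> real^3 \<Rightarrow> 'b" where
  "cpd f k x = vector_derivative (\<lambda>h. f (x + h *\<^sub>R axis k 1)) (at 0)"

definition test_fn :: "(real^3) set \<Rightarrow> (real^3 \<Rightarrow> 'b::euclidean_space) \<Rightarrow> bool" where
  "test_fn \<Omega> \<psi> \<longleftrightarrow> C_inf \<psi> \<and> (\<exists>K. compact K \<and> K \<subseteq> \<Omega> \<and> (\<forall>x. x \<notin> K \<longrightarrow> \<psi> x = 0))"

definition is_wpd :: "(real^3) set \<Rightarrow> (real^3 \<Rightarrow> 'b::euclidean_space) \<Rightarrow> 3 \<Rightarrow> (real^3 \<Rightarrow> 'b) \<Rightarrow> bool" where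
  "is_wpd \<Omega> u k g \<longleftrightarrow>
     u \<in> borel_measurable (lebesgue_on \<Omega>) \<and> g \<in> borel_measurable (lebesgue_on \<Omega>) \<and>
     (\<forall>\<psi>::real^3 \<Rightarrow> real. test_fn \<Omega> \<psi> \<longrightarrow>
        integrable (lebesgue_on \<Omega>) (\<lambda>x. cpd \<psi> k x *\<^sub>R u x) \<and>
        integrable (lebesgue_on \<Omega>) (\<lambda>x. \<psi> x *\<^sub>R g x) \<and>
        (\<integral>x. cpd \<psi> k x *\<^sub>R u x \<partial>lebesgue_on \<Omega>) = - (\<integral>x. \<psi> x *\<^sub>R g x \<partial>lebesgue_on \<Omega>))"

definition wpd :: "(real^3) set \<Rightarrow> (real^3 \<Rightarrow> 'b::euclidean_space) \<Rightarrow> 3 \<Rightarrow> real^3 \<Rightarrow> 'b" where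
  "wpd \<Omega> u k = (SOME g. is_wpd \<Omega> u k g)"

text \<open>weak gradients; convention (\<nabla>v)_{jk} = \<partial>_k v_j, (\<nabla>S)_{jkl} = \<partial>_l S_{jk}\<close>
definition wgrad_s :: "(real^3) set \<Rightarrow> (real^3 \<Rightarrow> real) \<Rightarrow> real^3 \<Rightarrow> real^3" where
  "wgrad_s \<Omega> u x = (\<chi> k. wpd \<Omega> u k x)"

definition wgrad_v :: "(real^3) set \<Rightarrow> (real^3 \<Rightarrow> real^3) \<Rightarrow> real^3 \<Rightarrow> real^3^3" where
  "wgrad_v \<Omega> v x = (\<chi> j k. wpd \<Omega> v k x $ j)"

definition wgrad_m :: "(real^3) set \<Rightarrow> (real^3 \<Rightarrow> real^3^3) \<Rightarrow> real^3 \<Rightarrow> real^3^3^3" where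
  "wgrad_m \<Omega> S x = (\<chi> j k l. wpd \<Omega> S l x $ j $ k)"

definition wdiv :: "(real^3) set \<Rightarrow> (real^3 \<Rightarrow> real^3) \<Rightarrow> real^3 \<Rightarrow> real" where
  "wdiv \<Omega> v x = (\<Sum>k\<in>UNIV. wpd \<Omega> v k x $ k)"

definition wlap :: "(real^3) set \<Rightarrow> (real^3 \<Rightarrow> real) \<Rightarrow> real^3 \<Rightarrow> real" where
  "wlap \<Omega> u x = (\<Sum>k\<in>UNIV. wpd \<Omega> (wpd \<Omega> u k) k x)"

definition L2 :: "(real^3) set \<Rightarrow> (real^3 \<Rightarrow> 'b::euclidean_space) \<Rightarrow> bool" where
  "L2 \<Omega> u \<longleftrightarrow> u \<in> borel_measurable (lebesgue_on \<Omega>) \<and> integrable (lebesgue_on \<Omega>) (\<lambda>x. (norm (u x))\<^sup>2)"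

definition L2norm :: "(real^3) set \<Rightarrow> (real^3 \<Rightarrow> 'b::euclidean_space) \<Rightarrow> real" where
  "L2norm \<Omega> u = sqrt (\<integral>x. (norm (u x))\<^sup>2 \<partial>lebesgue_on \<Omega>)"

definition H1 :: "(real^3) set \<Rightarrow> (real^3 \<Rightarrow> 'b::euclidean_space) \<Rightarrow> bool" where
  "H1 \<Omega> u \<longleftrightarrow> L2 \<Omega> u \<and> (\<forall>k. \<exists>g. is_wpd \<Omega> u k g \<and> L2 \<Omega> g)"

definition H1norm :: "(real^3) set \<Rightarrow> (real^3 \<Rightarrow> 'b::euclidean_space) \<Rightarrow> real" where
  "H1norm \<Omega> u = sqrt ((L2norm \<Omega> u)\<^sup>2 + (\<Sum>k\<in>UNIV. (L2norm \<Omega> (wpd \<Omega> u k))\<^sup>2))"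

definition H2 :: "(real^3) set \<Rightarrow> (real^3 \<Rightarrow> 'b::euclidean_space) \<Rightarrow> bool" where
  "H2 \<Omega> u \<longleftrightarrow> H1 \<Omega> u \<and> (\<forall>k. H1 \<Omega> (wpd \<Omega> u k))"

definition H2norm :: "(real^3) set \<Rightarrow> (real^3 \<Rightarrow> 'b::euclidean_space) \<Rightarrow> real" where
  "H2norm \<Omega> u = sqrt ((H1norm \<Omega> u)\<^sup>2 + (\<Sum>k\<in>UNIV. (H1norm \<Omega> (wpd \<Omega> u k))\<^sup>2))"

definition H1_0 :: "(real^3) set \<Rightarrow> (real^3 \<Rightarrow> 'b::euclidean_space) \<Rightarrow> bool" where
  "H1_0 \<Omega> u \<longleftrightarrow> H1 \<Omega> u \<and>
     (\<exists>\<psi>s. (\<forall>n. test_fn \<Omega> (\<psi>s n)) \<and> (\<lambda>n. H1norm \<Omega> (\<lambda>x. \<psi>s n x - u x)) \<longlonglongrightarrow> 0)"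

definition L2_div :: "(real^3) set \<Rightarrow> (real^3 \<Rightarrow> real^3) \<Rightarrow> bool" where
  "L2_div \<Omega> v \<longleftrightarrow> L2 \<Omega> v \<and>
     (\<forall>\<psi>::real^3 \<Rightarrow> real. test_fn \<Omega> \<psi> \<longrightarrow>
        (\<integral>x. v x \<bullet> (\<chi> k. cpd \<psi> k x) \<partial>lebesgue_on \<Omega>) = 0)"

definition H1_0div :: "(real^3) set \<Rightarrow> (real^3 \<Rightarrow> real^3) \<Rightarrow> bool" where
  "H1_0div \<Omega> v \<longleftrightarrow> H1_0 \<Omega> v \<and> (AE x in lebesgue_on \<Omega>. wdiv \<Omega> v x = 0)"

definition L2_symTr :: "(real^3) set \<Rightarrow> (real^3 \<Rightarrow> real^3^3) \<Rightarrow> bool" where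
  "L2_symTr \<Omega> S \<longleftrightarrow> L2 \<Omega> S \<and> (AE x in lebesgue_on \<Omega>. symTr (S x))"

definition Hm1 :: "(real^3) set \<Rightarrow> ((real^3 \<Rightarrow> real^3) \<Rightarrow> real) \<Rightarrow> bool" where
  "Hm1 \<Omega> F \<longleftrightarrow>
     (\<forall>a b u w. H1_0 \<Omega> u \<longrightarrow> H1_0 \<Omega> w \<longrightarrow>
         F (\<lambda>x. a *\<^sub>R u x + b *\<^sub>R w x) = a * F u + b * F w) \<and>
     (\<exists>C. \<forall>u. H1_0 \<Omega> u \<longrightarrow> \<bar>F u\<bar> \<le> C * H1norm \<Omega> u)"

definition Hm1norm :: "(real^3) set \<Rightarrow> ((real^3 \<Rightarrow> real^3) \<Rightarrow> real) \<Rightarrow> real" where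
  "Hm1norm \<Omega> F = Sup {\<bar>F u\<bar> | u. H1_0 \<Omega> u \<and> H1norm \<Omega> u \<le> 1}"

definition tint :: "ereal \<Rightarrow> real set" where
  "tint T = {t. 0 \<le> t \<and> ereal t < T}"

definition joint_meas :: "(real^3) set \<Rightarrow> ereal \<Rightarrow> (real^3 \<Rightarrow> real \<Rightarrow> 'b::euclidean_space) \<Rightarrow> bool" where
  "joint_meas \<Omega> T u \<longleftrightarrow> (\<lambda>(x,t). u x t) \<in> borel_measurable (lebesgue_on (\<Omega> \<times> tint T))"

text \<open>L^\<infinity>_loc([0,T); X), X given by membership predicate P and norm N\<close>
definition Linf_loc :: "(real^3) set \<Rightarrow> ereal \<Rightarrow> ((real^3 \<Rightarrow> 'b::euclidean_space) \<Rightarrow> bool)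
      \<Rightarrow> ((real^3 \<Rightarrow> 'b) \<Rightarrow> real) \<Rightarrow> (real^3 \<Rightarrow> real \<Rightarrow> 'b) \<Rightarrow> bool" where
  "Linf_loc \<Omega> T P N u \<longleftrightarrow> joint_meas \<Omega> T u \<and>
     (\<forall>t'\<in>tint T. \<exists>C. AE \<tau> in lebesgue_on {0..t'}. P (\<lambda>x. u x \<tau>) \<and> N (\<lambda>x. u x \<tau>) \<le> C)"

definition L2_loc :: "(real^3) set \<Rightarrow> ereal \<Rightarrow> ((real^3 \<Rightarrow> 'b::euclidean_space) \<Rightarrow> bool)
      \<Rightarrow> ((real^3 \<Rightarrow> 'b) \<Rightarrow> real) \<Rightarrow> (real^3 \<Rightarrow> real \<Rightarrow> 'b) \<Rightarrow> bool" where
  "L2_loc \<Omega> T P N u \<longleftrightarrow> joint_meas \<Omega> T u \<and>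
     (\<forall>t'\<in>tint T. (AE \<tau> in lebesgue_on {0..t'}. P (\<lambda>x. u x \<tau>)) \<and>
                  integrable (lebesgue_on {0..t'}) (\<lambda>\<tau>. (N (\<lambda>x. u x \<tau>))\<^sup>2))"

definition L2_loc_Hm1 :: "(real^3) set \<Rightarrow> ereal \<Rightarrow> (real \<Rightarrow> (real^3 \<Rightarrow> real^3) \<Rightarrow> real) \<Rightarrow> bool" where
  "L2_loc_Hm1 \<Omega> T f \<longleftrightarrow>
     (\<forall>u. H1_0 \<Omega> u \<longrightarrow> (\<lambda>\<tau>. f \<tau> u) \<in> borel_measurable (lebesgue_on (tint T))) \<and>
     (\<forall>t'\<in>tint T. (AE \<tau> in lebesgue_on {0..t'}. Hm1 \<Omega> (f \<tau>)) \<and>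
                  integrable (lebesgue_on {0..t'}) (\<lambda>\<tau>. (Hm1norm \<Omega> (f \<tau>))\<^sup>2))"

definition BV_on :: "(real \<Rightarrow> real) \<Rightarrow> real \<Rightarrow> real \<Rightarrow> bool" where
  "BV_on E a b \<longleftrightarrow> (\<exists>B. \<forall>ps. sorted ps \<and> set ps \<subseteq> {a..b} \<longrightarrow>
      (\<Sum>i<length ps - 1. \<bar>E (ps ! Suc i) - E (ps ! i)\<bar>) \<le> B)"

definition BV_loc :: "ereal \<Rightarrow> (real \<Rightarrow> real) \<Rightarrow> bool" where
  "BV_loc T E \<longleftrightarrow> (\<forall>t'. 0 \<le> t' \<and> ereal t' \<le> T \<longrightarrow> BV_on E 0 t')"

definition cpdx :: "(real^3 \<Rightarrow> real \<Rightarrow> 'b::real_normed_vector) \<Rightarrow> 3 \<Rightarrow> real^3 \<Rightarrow> real \<Rightarrow> 'b" where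
  "cpdx u k x t = vector_derivative (\<lambda>h. u (x + h *\<^sub>R axis k 1) t) (at 0)"

definition cpdt :: "(real^3 \<Rightarrow> real \<Rightarrow> 'b::real_normed_vector) \<Rightarrow> real^3 \<Rightarrow> real \<Rightarrow> 'b" where
  "cpdt u x t = vector_derivative (\<lambda>h. u x (t + h)) (at 0)"

text \<open>C^\<infinity>_0(\<Omega> \<times> [0,T)): smooth, with support in \<Omega>\<times>[0,T) compact
  (values for t < 0 belong to an arbitrary smooth extension and are irrelevant)\<close>
definition test_ST :: "(real^3) set \<Rightarrow> ereal \<Rightarrow> (real^3 \<Rightarrow> real \<Rightarrow> 'b::euclidean_space) \<Rightarrow> bool" where
  "test_ST \<Omega> T u \<longleftrightarrow> C_inf (\<lambda>(x,t). u x t) \<and>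
     (\<exists>K. compact K \<and> K \<subseteq> \<Omega> \<times> tint T \<and> (\<forall>x t. 0 \<le> t \<and> (x,t) \<notin> K \<longrightarrow> u x t = 0))"

definition test_ST_div :: "(real^3) set \<Rightarrow> ereal \<Rightarrow> (real^3 \<Rightarrow> real \<Rightarrow> real^3) \<Rightarrow> bool" where
  "test_ST_div \<Omega> T u \<longleftrightarrow> test_ST \<Omega> T u \<and>
     (\<forall>x t. 0 \<le> t \<longrightarrow> (\<Sum>k\<in>UNIV. cpdx u k x t $ k) = 0)"

definition test_ST_symTr :: "(real^3) set \<Rightarrow> ereal \<Rightarrow> (real^3 \<Rightarrow> real \<Rightarrow> real^3^3) \<Rightarrow> bool" where
  "test_ST_symTr \<Omega> T u \<longleftrightarrow> test_ST \<Omega> T u \<and> (\<forall>x t. 0 \<le> t \<longrightarrow> symTr (u x t))"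

definition cgrad_s :: "(real^3 \<Rightarrow> real \<Rightarrow> real) \<Rightarrow> real^3 \<Rightarrow> real \<Rightarrow> real^3" where
  "cgrad_s u x t = (\<chi> k. cpdx u k x t)"

definition cgrad_v :: "(real^3 \<Rightarrow> real \<Rightarrow> real^3) \<Rightarrow> real^3 \<Rightarrow> real \<Rightarrow> real^3^3" where
  "cgrad_v u x t = (\<chi> j k. cpdx u k x t $ j)"

definition cgrad_m :: "(real^3 \<Rightarrow> real \<Rightarrow> real^3^3) \<Rightarrow> real^3 \<Rightarrow> real \<Rightarrow> real^3^3^3" where
  "cgrad_m u x t = (\<chi> j k l. cpdx u l x t $ j $ k)"

definition rho :: "real \<Rightarrow> real \<Rightarrow> real \<Rightarrow> real" where
  "rho \<rho>1 \<rho>2 y = (\<rho>1 + \<rho>2) / 2 + (\<rho>2 - \<rho>1) / 2 * y"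

definition assm_A1 :: "real \<Rightarrow> real \<Rightarrow> bool" where
  "assm_A1 \<rho>1 \<rho>2 \<longleftrightarrow> \<rho>1 > 0 \<and> \<rho>2 > 0"

definition assm_A2 :: "(real \<Rightarrow> real) \<Rightarrow> (real \<Rightarrow> real) \<Rightarrow> bool" where
  "assm_A2 \<nu> \<eta> \<longleftrightarrow>
     continuous_on UNIV \<nu> \<and> (\<exists>\<nu>1 \<nu>2. 0 < \<nu>1 \<and> (\<forall>y. \<nu>1 \<le> \<nu> y \<and> \<nu> y \<le> \<nu>2)) \<and>
     Ck 1 \<eta> \<and> (\<exists>\<eta>1 \<eta>2. 0 \<le> \<eta>1 \<and> (\<forall>y. \<eta>1 \<le> \<eta> y \<and> \<eta> y \<le> \<eta>2)) \<and>
     (\<exists>C. \<forall>y. \<bar>deriv \<eta> y\<bar> \<le> C)"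

definition assm_A3 :: "(real \<Rightarrow> real) \<Rightarrow> bool" where
  "assm_A3 m \<longleftrightarrow> Ck 1 m \<and> (\<exists>m1 m2. 0 < m1 \<and> (\<forall>y. m1 \<le> m y \<and> m y \<le> m2))"

definition assm_A4 :: "(real^3) set \<Rightarrow> (real^3 \<Rightarrow> real \<Rightarrow> real^3^3 \<Rightarrow> ennreal) \<Rightarrow> bool" where
  "assm_A4 \<Omega> P \<longleftrightarrow>
     (\<lambda>(x,y,z). P x y z) \<in> borel_measurable (lebesgue_on (\<Omega> \<times> UNIV \<times> Collect symTr)) \<and>
     (\<exists>x\<in>\<Omega>. \<exists>y z. symTr z \<and> P x y z < \<infinity>) \<and>
     (\<forall>x\<in>\<Omega>. \<forall>y. P x y 0 = 0) \<and>
     (\<forall>x\<in>\<Omega>. \<forall>c. openin (top_of_set (UNIV \<times> Collect symTr))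
                     {p \<in> UNIV \<times> Collect symTr. c < P x (fst p) (snd p)}) \<and>
     (\<forall>x\<in>\<Omega>. \<forall>y z1 z2 a. symTr z1 \<longrightarrow> symTr z2 \<longrightarrow> 0 \<le> a \<longrightarrow> a \<le> 1 \<longrightarrow>
         P x y ((1 - a) *\<^sub>R z1 + a *\<^sub>R z2) \<le> ennreal (1 - a) * P x y z1 + ennreal a * P x y z2) \<and>
     (\<forall>x\<in>\<Omega>. \<forall>z. symTr z \<longrightarrow> continuous_on UNIV (\<lambda>y. P x y z))"

definition assm_A5 :: "(real^3) set \<Rightarrow> ereal \<Rightarrow> (real^3 \<Rightarrow> real^3) \<Rightarrow> (real^3 \<Rightarrow> real^3^3)
      \<Rightarrow> (real \<Rightarrow> (real^3 \<Rightarrow> real^3) \<Rightarrow> real) \<Rightarrow> (real^3 \<Rightarrow> real) \<Rightarrow> bool" where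
  "assm_A5 \<Omega> T v0 S0 f \<phi>0 \<longleftrightarrow>
     L2_div \<Omega> v0 \<and> L2_symTr \<Omega> S0 \<and> L2_loc_Hm1 \<Omega> T f \<and> H1 \<Omega> \<phi>0 \<and>
     (AE x in lebesgue_on \<Omega>. \<bar>\<phi>0 x\<bar> \<le> 1) \<and>
     (let mean = (\<integral>x. \<phi>0 x \<partial>lebesgue_on \<Omega>) / measure lebesgue \<Omega> in -1 < mean \<and> mean < 1)"

definition assm_A6 :: "(real \<Rightarrow> real) \<Rightarrow> bool" where
  "assm_A6 Wdw \<longleftrightarrow> Ck 2 Wdw \<and> (\<forall>y. Wdw y \<ge> 0) \<and> Wdw 1 = 0 \<and> Wdw (-1) = 0 \<and>
     (\<forall>y. y \<noteq> 1 \<and> y \<noteq> -1 \<longrightarrow> Wdw y > 0)"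

text \<open>W_sg on [-1,1] (its value +\<infinity> outside [-1,1] is encoded via |\<phi>| \<le> 1 a.e.)\<close>
definition assm_A7 :: "(real \<Rightarrow> real) \<Rightarrow> bool" where
  "assm_A7 Wsg \<longleftrightarrow>
     continuous_on {-1..1} Wsg \<and>
     (\<forall>y\<in>{-1<..<1}. Wsg field_differentiable (at y)) \<and>
     (\<forall>y\<in>{-1<..<1}. deriv Wsg field_differentiable (at y)) \<and>
     continuous_on {-1<..<1} (deriv (deriv Wsg)) \<and>
     (\<forall>y\<in>{-1..1}. Wsg y \<ge> 0) \<and>
     filterlim (deriv Wsg) at_bot (at_right (-1)) \<and>
     filterlim (deriv Wsg) at_top (at_left 1) \<and>
     (\<exists>\<kappa>\<ge>0. \<forall>y\<in>{-1<..<1}. deriv (deriv Wsg) y \<ge> - \<kappa>)"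

definition subdiff_sg :: "(real \<Rightarrow> real) \<Rightarrow> real \<Rightarrow> real \<Rightarrow> bool" where
  "subdiff_sg Wsg y b \<longleftrightarrow> \<bar>y\<bar> < 1 \<and> b = deriv Wsg y"

definition subdiff_ind :: "real \<Rightarrow> real \<Rightarrow> bool" where
  "subdiff_ind y b \<longleftrightarrow> (y = 1 \<and> b \<ge> 0) \<or> (\<bar>y\<bar> < 1 \<and> b = 0) \<or> (y = -1 \<and> b \<le> 0)"

definition energy :: "(real^3) set \<Rightarrow> real \<Rightarrow> real \<Rightarrow> (real \<Rightarrow> real)
      \<Rightarrow> (real^3 \<Rightarrow> real^3) \<Rightarrow> (real^3 \<Rightarrow> real^3^3) \<Rightarrow> (real^3 \<Rightarrow> real) \<Rightarrow> real" where
  "energy \<Omega> \<rho>1 \<rho>2 W v S \<phi> =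
     (\<integral>x. rho \<rho>1 \<rho>2 (\<phi> x) / 2 * (norm (v x))\<^sup>2 + (norm (S x))\<^sup>2 / 2
          + (norm (wgrad_s \<Omega> \<phi> x))\<^sup>2 / 2 + W (\<phi> x) \<partial>lebesgue_on \<Omega>)"

definition reg_weight :: "(real^3) set \<Rightarrow> ereal \<Rightarrow>
    ((real^3 \<Rightarrow> real \<Rightarrow> real^3) \<Rightarrow> (real^3 \<Rightarrow> real \<Rightarrow> real^3^3) \<Rightarrow> (real^3 \<Rightarrow> real \<Rightarrow> real)
        \<Rightarrow> (real^3 \<Rightarrow> real \<Rightarrow> real) \<Rightarrow> real \<Rightarrow> real) \<Rightarrow> bool" where
  "reg_weight \<Omega> T K \<longleftrightarrow>
     (\<forall>vt St pt mt \<tau>. test_ST_div \<Omega> T vt \<and> test_ST_symTr \<Omega> T St \<and> test_ST \<Omega> T pt \<and> test_ST \<Omega> T mt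
        \<longrightarrow> K vt St pt mt \<tau> \<ge> 0) \<and>
     (\<forall>\<tau>. K (\<lambda>x t. 0) (\<lambda>x t. 0) (\<lambda>x t. 0) (\<lambda>x t. 0) \<tau> = 0)"

definition EV_integrand where
  "EV_integrand \<Omega> \<gamma> \<rho>1 \<rho>2 \<nu> \<eta> m Wdw v S \<phi> \<mu> \<beta> vt St pt mt x \<tau> =
    (let ph = \<phi> x \<tau>; vv = v x \<tau>; SS = S x \<tau>;
         Dv = wgrad_v \<Omega> (\<lambda>y. v y \<tau>) x; Dvs = symp Dv; Dvk = skwp Dv;
         gphi = wgrad_s \<Omega> (\<lambda>y. \<phi> y \<tau>) x; gmu = wgrad_s \<Omega> (\<lambda>y. \<mu> y \<tau>) x;
         DS = wgrad_m \<Omega> (\<lambda>y. S y \<tau>) x;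
         r = rho \<rho>1 \<rho>2 ph;
         J = (- (\<rho>2 - \<rho>1) / 2 * m ph) *\<^sub>R gmu;
         Dtv = cgrad_v vt x \<tau>; DtS = cgrad_m St x \<tau>
     in 2 * \<nu> ph * (norm Dvs)\<^sup>2 + \<gamma> * (norm DS)\<^sup>2 + m ph * (norm gmu)\<^sup>2
      + r * (vv \<bullet> cpdt vt x \<tau>) + r * (outer vv vv \<bullet> Dtv) + outer vv J \<bullet> Dtv
      - 2 * \<nu> ph * (Dvs \<bullet> symp Dtv) - \<eta> ph * (SS \<bullet> symp Dtv) + outer gphi gphi \<bullet> Dtv
      + SS \<bullet> cpdt St x \<tau> + outer3 SS vv \<bullet> DtS - ((SS ** Dvk - Dvk ** SS) \<bullet> St x \<tau>)
      - \<gamma> * (DS \<bullet> DtS) + \<eta> ph * (Dvs \<bullet> St x \<tau>)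
      + ph * cpdt pt x \<tau> - (vv \<bullet> gphi) * pt x \<tau> - m ph * (gmu \<bullet> cgrad_s pt x \<tau>)
      - (\<mu> x \<tau> - (- wlap \<Omega> (\<lambda>y. \<phi> y \<tau>) x + deriv Wdw ph + \<beta> x \<tau>)) * mt x \<tau>)"

text \<open>the energy-variational inequality on [s,t] for a given test quadruple;
  the term \<int>(P(\<phi>;S) - P(\<phi>;St)) is split into its two [0,\<infinity>]-valued parts and the
  inequality is read in the extended reals\<close>
definition EV_ineq where
  "EV_ineq \<Omega> \<gamma> \<rho>1 \<rho>2 \<nu> \<eta> m P Wdw W f K v S \<phi> \<mu> E \<beta> vt St pt mt s t \<longleftrightarrow>
    (let bdry = (\<lambda>\<tau>. E \<tau> - (\<integral>x. rho \<rho>1 \<rho>2 (\<phi> x \<tau>) * (v x \<tau> \<bullet> vt x \<tau>) \<partial>lebesgue_on \<Omega>)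
                        - (\<integral>x. S x \<tau> \<bullet> St x \<tau> \<partial>lebesgue_on \<Omega>)
                        - (\<integral>x. \<phi> x \<tau> * pt x \<tau> \<partial>lebesgue_on \<Omega>));
         ig = (\<lambda>(x,\<tau>). EV_integrand \<Omega> \<gamma> \<rho>1 \<rho>2 \<nu> \<eta> m Wdw v S \<phi> \<mu> \<beta> vt St pt mt x \<tau>);
         PS = (\<integral>\<^sup>+\<tau>. (\<integral>\<^sup>+x. P x (\<phi> x \<tau>) (S x \<tau>) \<partial>lebesgue_on \<Omega>) \<partial>lebesgue_on {s..t});
         PSt = (\<integral>\<^sup>+\<tau>. (\<integral>\<^sup>+x. P x (\<phi> x \<tau>) (St x \<tau>) \<partial>lebesgue_on \<Omega>) \<partial>lebesgue_on {s..t});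
         Kt = (\<integral>\<^sup>+\<tau>. ennreal (K vt St pt mt \<tau> *
                 (E \<tau> - energy \<Omega> \<rho>1 \<rho>2 W (\<lambda>x. v x \<tau>) (\<lambda>x. S x \<tau>) (\<lambda>x. \<phi> x \<tau>))) \<partial>lebesgue_on {s..t});
         ft = (\<integral>\<tau>. f \<tau> (\<lambda>x. v x \<tau> - vt x \<tau>) \<partial>lebesgue_on {s..t})
     in integrable (lebesgue_on (\<Omega> \<times> {s..t})) ig \<and>
        ereal (bdry t - bdry s + (\<integral>p. ig p \<partial>lebesgue_on (\<Omega> \<times> {s..t}))) + enn2ereal PS
          \<le> enn2ereal Kt + ereal ft + enn2ereal PSt)"

definition EV_solution where
  "EV_solution \<Omega> T \<gamma> \<rho>1 \<rho>2 \<nu> \<eta> m P Wdw Wsing dWsing f v0 S0 \<phi>0 K v S \<phi> \<mu> E \<beta> \<longleftrightarrow>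
    (let W = (\<lambda>y. Wdw y + Wsing y) in
     Linf_loc \<Omega> T (L2_div \<Omega>) (L2norm \<Omega>) v \<and> L2_loc \<Omega> T (H1_0div \<Omega>) (H1norm \<Omega>) v \<and>
     Linf_loc \<Omega> T (L2_symTr \<Omega>) (L2norm \<Omega>) S \<and>
     (\<gamma> > 0 \<longrightarrow> L2_loc \<Omega> T (H1 \<Omega>) (H1norm \<Omega>) S) \<and>
     Linf_loc \<Omega> T (H1 \<Omega>) (H1norm \<Omega>) \<phi> \<and> L2_loc \<Omega> T (H2 \<Omega>) (H2norm \<Omega>) \<phi> \<and>
     (AE p in lebesgue_on (\<Omega> \<times> tint T). \<bar>\<phi> (fst p) (snd p)\<bar> \<le> 1) \<and>
     L2_loc \<Omega> T (H1 \<Omega>) (H1norm \<Omega>) \<mu> \<and>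
     BV_loc T E \<and>
     (AE \<tau> in lebesgue_on (tint T).
         E \<tau> \<ge> energy \<Omega> \<rho>1 \<rho>2 W (\<lambda>x. v x \<tau>) (\<lambda>x. S x \<tau>) (\<lambda>x. \<phi> x \<tau>)) \<and>
     (AE p in lebesgue_on (\<Omega> \<times> tint T). dWsing (\<phi> (fst p) (snd p)) (\<beta> (fst p) (snd p))) \<and>
     (\<forall>x\<in>\<Omega>. v x 0 = v0 x \<and> S x 0 = S0 x \<and> \<phi> x 0 = \<phi>0 x) \<and>
     (\<forall>vt St pt mt. test_ST_div \<Omega> T vt \<and> test_ST_symTr \<Omega> T St \<and> test_ST \<Omega> T pt \<and> test_ST \<Omega> T mt \<longrightarrow>
        (\<exists>N. N \<in> null_sets lebesgue \<and>
           (\<forall>s t. s \<in> {0} \<union> (tint T - N) \<and> t \<in> tint T - N \<and> s < t \<longrightarrow>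
              EV_ineq \<Omega> \<gamma> \<rho>1 \<rho>2 \<nu> \<eta> m P Wdw W f K v S \<phi> \<mu> E \<beta> vt St pt mt s t))))"

end

theory Submission
  imports Defs
begin

lemma dd_has_derivative:
  fixes f :: "'a::real_normed_vector \<Rightarrow> 'b::real_normed_vector"
  assumes "(f has_derivative f') (at x)"
  shows "dd w f x = f' w"
proof -
  have l: "linear f'" using assms has_derivative_linear by blast
  have "((\<lambda>h::real. x + h *\<^sub>R w) has_derivative (\<lambda>h. h *\<^sub>R w)) (at 0)"
    by (auto intro!: derivative_eq_intros)
  moreover have "(f has_derivative f') (at (x + 0 *\<^sub>R w))" using assms by simp
  ultimately have "((\<lambda>h::real. f (x + h *\<^sub>R w)) has_derivative (\<lambda>h. f' (h *\<^sub>R w))) (at 0)"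
    using diff_chain_at[of "\<lambda>h::real. x + h *\<^sub>R w" "\<lambda>h. h *\<^sub>R w" 0 f f'] by (simp add: o_def)
  then have "((\<lambda>h::real. f (x + h *\<^sub>R w)) has_vector_derivative f' w) (at 0)"
    unfolding has_vector_derivative_def using linear_scale[OF l] by simp
  then show ?thesis unfolding dd_def by (rule vector_derivative_at)
qed

definition smooth_set :: "('a::euclidean_space \<Rightarrow> real) set \<Rightarrow> bool" where
  "smooth_set S \<longleftrightarrow> (\<forall>f\<in>S. (\<forall>x. f differentiable (at x)) \<and> (\<forall>w\<in>Basis. dd w f \<in> S))"

definition smooth :: "('a::euclidean_space \<Rightarrow> real) \<Rightarrow> bool" where
  "smooth f \<longleftrightarrow> (\<exists>S. smooth_set S \<and> f \<in> S)"

lemma smooth_set_iter: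
  assumes "smooth_set S" "f \<in> S" "set ws \<subseteq> Basis"
  shows "iter_dd ws f \<in> S"
  using assms(3) proof (induction ws)
  case Nil then show ?case using assms by simp
next
  case (Cons w ws) then show ?case using assms(1) unfolding smooth_set_def by auto
qed

lemma smooth_C_inf:
  assumes "smooth f" shows "C_inf f"
proof -
  obtain S where S: "smooth_set S" "f \<in> S" using assms smooth_def by blast
  have d: "iter_dd ws f differentiable_on UNIV" if "set ws \<subseteq> Basis" for ws
    using smooth_set_iter[OF S that] S(1) unfolding smooth_set_def
    by (simp add: differentiable_at_imp_differentiable_on)
  show ?thesis unfolding C_inf_def Ck_def
    using d differentiable_imp_continuous_on by blast
qed

inductive_set alg :: "('a \<Rightarrow> real) set \<Rightarrow> ('a \<Rightarrow> real) set" for G where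
  gen: "g \<in> G \<Longrightarrow> g \<in> alg G"
| const: "(\<lambda>x. c) \<in> alg G"
| add: "f \<in> alg G \<Longrightarrow> h \<in> alg G \<Longrightarrow> (\<lambda>x. f x + h x) \<in> alg G"
| mult: "f \<in> alg G \<Longrightarrow> h \<in> alg G \<Longrightarrow> (\<lambda>x. f x * h x) \<in> alg G"

lemma dd_eq_frechet:
  fixes f :: "'a::real_normed_vector \<Rightarrow> real"
  assumes "f differentiable (at x)"
  shows "dd w f x = frechet_derivative f (at x) w"
  using assms dd_has_derivative frechet_derivative_works by blast

lemma alg_smooth_set:
  fixes G :: "('a::euclidean_space \<Rightarrow> real) set"
  assumes "\<And>g. g \<in> G \<Longrightarrow> (\<forall>x. g differentiable (at x)) \<and> (\<forall>w\<in>Basis. dd w g \<in> alg G)"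
  shows "smooth_set (alg G)"
  unfolding smooth_set_def
proof
  fix f assume "f \<in> alg G"
  then show "(\<forall>x. f differentiable (at x)) \<and> (\<forall>w\<in>Basis. dd w f \<in> alg G)"
  proof induction
    case (gen g) then show ?case using assms by blast
  next
    case (const c)
    have "dd w (\<lambda>x::'a. c) = (\<lambda>x. 0)" for w :: 'a
      by (rule ext, rule dd_has_derivative) (auto intro!: derivative_eq_intros)
    then have "dd w (\<lambda>x::'a. c) \<in> alg G" for w by (simp only:) (rule alg.const)
    then show ?case by simp
  next
    case (add f h)
    have "dd w (\<lambda>x. f x + h x) = (\<lambda>x. dd w f x + dd w h x)" for w
    proof
      fix x
      have D: "((\<lambda>x. f x + h x) has_derivative (\<lambda>v. frechet_derivative f (at x) v + frechet_derivative h (at x) v)) (at x)"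
        using add.IH frechet_derivative_works by (intro has_derivative_add) auto
      show "dd w (\<lambda>x. f x + h x) x = dd w f x + dd w h x"
        using dd_has_derivative[OF D] dd_eq_frechet[of f x w] dd_eq_frechet[of h x w] add.IH by simp
    qed
    then show ?case using add.IH by (simp add: alg.add differentiable_add)
  next
    case (mult f h)
    have "dd w (\<lambda>x. f x * h x) = (\<lambda>x. dd w f x * h x + f x * dd w h x)" for w
    proof
      fix x
      have D: "((\<lambda>x. f x * h x) has_derivative (\<lambda>v. f x * frechet_derivative h (at x) v + frechet_derivative f (at x) v * h x)) (at x)"
        using mult.IH frechet_derivative_works by (intro has_derivative_mult) auto
      show "dd w (\<lambda>x. f x * h x) x = dd w f x * h x + f x * dd w h x"
        using dd_has_derivative[OF D] dd_eq_frechet[of f x w] dd_eq_frechet[of h x w] mult.IH by simp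
    qed
    moreover have "(\<lambda>x. dd w f x * h x + f x * dd w h x) \<in> alg G" if "w \<in> Basis" for w
      using mult that by (intro alg.add alg.mult) auto
    ultimately show ?case using mult.IH by (simp add: differentiable_mult)
  qed
qed

lemma alg_smooth:
  fixes G :: "('a::euclidean_space \<Rightarrow> real) set"
  assumes "\<And>g. g \<in> G \<Longrightarrow> (\<forall>x. g differentiable (at x)) \<and> (\<forall>w\<in>Basis. dd w g \<in> alg G)"
    and "f \<in> alg G"
  shows "smooth f"
  using alg_smooth_set[OF assms(1)] assms(2) smooth_def by blast

lemma alg_prod:
  assumes "finite I" "\<And>i. i \<in> I \<Longrightarrow> f i \<in> alg G"
  shows "(\<lambda>x. \<Prod>i\<in>I. f i x) \<in> alg G"
  using assms by (induction I rule: finite_induct) (simp_all add: alg.const alg.mult)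

lemma alg_power:
  assumes "f \<in> alg G" shows "(\<lambda>x. f x ^ n) \<in> alg G"
  using assms by (induction n) (simp_all add: alg.const alg.mult)

lemma alg_diff:
  assumes "f \<in> alg G" "h \<in> alg G" shows "(\<lambda>x. f x - h x) \<in> alg G"
proof -
  have "(\<lambda>x. f x + (-1) * h x) \<in> alg G" using assms by (intro alg.add alg.mult alg.const)
  then show ?thesis by simp
qed

definition qf :: "nat \<Rightarrow> real \<Rightarrow> real" where
  "qf n s = (if s > 0 then exp (- 1 / s) / s ^ n else 0)"

lemma qf_lim0: "((\<lambda>h. qf n h / h) \<longlongrightarrow> 0) (at (0::real))"
proof -
  have r: "((\<lambda>h. qf n h / h) \<longlongrightarrow> 0) (at_right (0::real))"
  proof -
    have "((\<lambda>x. x ^ (n+1) / exp x) \<longlongrightarrow> (0::real)) at_top" by (rule tendsto_power_div_exp_0)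
    then have "((\<lambda>h. (inverse h) ^ (n+1) / exp (inverse h)) \<longlongrightarrow> (0::real)) (at_right 0)"
      by (rule filterlim_compose) (rule filterlim_inverse_at_top_right)
    moreover have "eventually (\<lambda>h. (inverse h) ^ (n+1) / exp (inverse h) = qf n h / h) (at_right (0::real))"
      using eventually_at_right_less[of "0::real"]
      by eventually_elim
         (simp add: qf_def exp_minus field_simps power_Suc power_inverse flip: inverse_eq_divide)
    ultimately show ?thesis by (rule Lim_transform_eventually)
  qed
  have l: "((\<lambda>h. qf n h / h) \<longlongrightarrow> 0) (at_left (0::real))"
  proof -
    have "eventually (\<lambda>h. 0 = qf n h / h) (at_left (0::real))"
      unfolding eventually_at_left_field
      by (intro exI[of _ "-1"]) (simp add: qf_def)
    then show ?thesis by (rule Lim_transform_eventually[OF tendsto_const])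
  qed
  show ?thesis using l r by (simp add: filterlim_at_split)
qed

lemma qf_deriv: "(qf n has_real_derivative (qf (n+2) s - real n * qf (n+1) s)) (at s)"
proof (cases "s > 0")
  case True
  have "((\<lambda>y. exp (- 1 / y) / y ^ n) has_real_derivative
          (exp (- 1 / s) / s ^ (n+2) - real n * (exp (- 1 / s) / s ^ (n+1)))) (at s)"
    using True
    apply (auto intro!: derivative_eq_intros)
    apply (simp add: field_simps power_Suc)
    apply (cases n) apply auto
    done
  then have "(qf n has_real_derivative (exp (- 1 / s) / s ^ (n+2) - real n * (exp (- 1 / s) / s ^ (n+1)))) (at s)"
    by (rule has_field_derivative_transform_within_open[where S="{0<..}"]) (use True in \<open>auto simp: qf_def\<close>)
  moreover have "qf (n+2) s - real n * qf (n+1) s = exp (- 1 / s) / s ^ (n+2) - real n * (exp (- 1 / s) / s ^ (n+1))"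
    using True by (simp add: qf_def)
  ultimately show ?thesis by simp
next
  case False
  show ?thesis
  proof (cases "s < 0")
    case True
    have "((\<lambda>y. 0) has_real_derivative 0) (at s)" by simp
    then have "(qf n has_real_derivative 0) (at s)"
      by (rule has_field_derivative_transform_within_open[where S="{..<0}"]) (use True in \<open>auto simp: qf_def\<close>)
    then show ?thesis using True by (simp add: qf_def)
  next
    case False
    with \<open>\<not> s > 0\<close> have s: "s = 0" by simp
    show ?thesis unfolding s has_field_derivative_iff
      using qf_lim0[of n] by (simp add: qf_def)
  qed
qed

definition Gq :: "('a::euclidean_space \<Rightarrow> real) set" where
  "Gq = {(\<lambda>p. qf n (a * (p \<bullet> e) + b)) | n a b e. e \<in> Basis}"

lemma Gq_ok:
  assumes "g \<in> (Gq :: ('a::euclidean_space \<Rightarrow> real) set)"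
  shows "(\<forall>x. g differentiable (at x)) \<and> (\<forall>w\<in>Basis. dd w g \<in> alg Gq)"
proof -
  obtain n a b and e :: 'a where g: "g = (\<lambda>p. qf n (a * (p \<bullet> e) + b))" and e: "e \<in> Basis"
    using assms unfolding Gq_def by blast
  define D where "D = (\<lambda>s. qf (n+2) s - real n * qf (n+1) s)"
  have hd: "(g has_derivative (\<lambda>v. D (a * (x \<bullet> e) + b) * (a * (v \<bullet> e)))) (at x)" for x
  proof -
    have 1: "((\<lambda>p. a * (p \<bullet> e) + b) has_derivative (\<lambda>v. a * (v \<bullet> e))) (at x)"
      by (auto intro!: derivative_eq_intros)
    have 2: "(qf n has_derivative (\<lambda>y. D (a * (x \<bullet> e) + b) * y)) (at (a * (x \<bullet> e) + b))"
      using qf_deriv[of n "a * (x \<bullet> e) + b"] unfolding D_def has_field_derivative_def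
      by (simp add: mult.commute[of _ "D _"])
    show ?thesis using diff_chain_at[OF 1 2] unfolding g by (simp add: o_def)
  qed
  have "dd w g = (\<lambda>x. (a * (w \<bullet> e)) * (qf (n+2) (a * (x \<bullet> e) + b) - real n * qf (n+1) (a * (x \<bullet> e) + b)))" for w
    using dd_has_derivative[OF hd] unfolding D_def by (auto simp: algebra_simps)
  moreover have "(\<lambda>x. (a * (w \<bullet> e)) * (qf (n+2) (a * (x \<bullet> e) + b) - real n * qf (n+1) (a * (x \<bullet> e) + b))) \<in> alg Gq" for w
  proof -
    have "(\<lambda>x. qf (n+2) (a * (x \<bullet> e) + b)) \<in> alg Gq" "(\<lambda>x. qf (n+1) (a * (x \<bullet> e) + b)) \<in> alg Gq"
      using e by (auto simp: Gq_def intro!: alg.gen)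
    then show ?thesis
      by (intro alg.mult alg.const alg_diff) 
  qed
  ultimately show ?thesis using hd by (auto simp: differentiable_def)
qed

lemma alg_Gq_smooth: "f \<in> alg Gq \<Longrightarrow> smooth f"
  using alg_smooth Gq_ok by blast

definition psi :: "real \<Rightarrow> real" where "psi s = qf 0 s"

definition bump :: "real \<Rightarrow> real \<Rightarrow> real \<Rightarrow> real" where
  "bump c d s = psi (s - c) * psi (d - s)"

definition Fbox :: "'a::euclidean_space \<Rightarrow> 'a \<Rightarrow> 'a \<Rightarrow> real" where
  "Fbox c d p = (\<Prod>i\<in>Basis. bump (c \<bullet> i) (d \<bullet> i) (p \<bullet> i))"

definition rhob :: "nat \<Rightarrow> 'a::euclidean_space \<Rightarrow> 'a \<Rightarrow> 'a \<Rightarrow> real" where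
  "rhob n c d p = (\<Prod>i\<in>Basis. 1 - (1 - bump (c \<bullet> i) (d \<bullet> i) (p \<bullet> i)) ^ n)"

lemma bump_alg:
  assumes "i \<in> (Basis :: 'a::euclidean_space set)"
  shows "(\<lambda>p::'a. bump (c \<bullet> i) (d \<bullet> i) (p \<bullet> i)) \<in> alg Gq"
proof -
  have "(\<lambda>p::'a. qf 0 (1 * (p \<bullet> i) + (- (c \<bullet> i)))) \<in> alg Gq"
       "(\<lambda>p::'a. qf 0 ((-1) * (p \<bullet> i) + (d \<bullet> i))) \<in> alg Gq"
    using assms unfolding Gq_def by (intro alg.gen; blast)+
  then have "(\<lambda>p::'a. qf 0 (1 * (p \<bullet> i) + (- (c \<bullet> i))) * qf 0 ((-1) * (p \<bullet> i) + (d \<bullet> i))) \<in> alg Gq"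
    by (rule alg.mult)
  then show ?thesis by (simp add: bump_def psi_def)
qed

lemma Fbox_alg: "Fbox c d \<in> alg Gq"
proof -
  have "(\<lambda>p. \<Prod>i\<in>Basis. bump (c \<bullet> i) (d \<bullet> i) (p \<bullet> i)) \<in> alg Gq"
    by (intro alg_prod bump_alg) auto
  then show ?thesis by (simp add: Fbox_def[abs_def])
qed

lemma rhob_alg: "rhob n c d \<in> alg Gq"
proof -
  have "(\<lambda>p. \<Prod>i\<in>Basis. 1 - (1 - bump (c \<bullet> i) (d \<bullet> i) (p \<bullet> i)) ^ n) \<in> alg Gq"
    by (intro alg_prod alg_diff alg_power alg.const bump_alg) auto
  then show ?thesis by (simp add: rhob_def[abs_def])
qed

lemma psi_nonneg: "0 \<le> psi s" by (simp add: psi_def qf_def)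
lemma psi_le1: "psi s \<le> 1" by (simp add: psi_def qf_def)
lemma psi_pos: "0 < psi s \<longleftrightarrow> 0 < s" by (simp add: psi_def qf_def)
lemma psi_zero: "s \<le> 0 \<Longrightarrow> psi s = 0" by (simp add: psi_def qf_def)

lemma bump_nonneg: "0 \<le> bump c d s" by (simp add: bump_def psi_nonneg)
lemma bump_le1: "bump c d s \<le> 1"
  unfolding bump_def using psi_nonneg psi_le1 by (meson mult_le_one)
lemma bump_pos: "0 < bump c d s \<longleftrightarrow> c < s \<and> s < d"
  unfolding bump_def using psi_nonneg psi_pos
  by (metis diff_gt_0_iff_gt less_eq_real_def mult_pos_pos mult_zero_left mult_zero_right order_less_irrefl)

lemma Fbox_pos: "p \<in> box c d \<Longrightarrow> 0 < Fbox c d p"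
  unfolding Fbox_def by (intro prod_pos) (auto simp: bump_pos mem_box)

lemma Fbox_zero: "p \<notin> box c d \<Longrightarrow> Fbox c d p = 0"
proof -
  assume "p \<notin> box c d"
  then obtain i where i: "i \<in> Basis" "\<not> (c \<bullet> i < p \<bullet> i \<and> p \<bullet> i < d \<bullet> i)" by (auto simp: mem_box)
  then have "bump (c \<bullet> i) (d \<bullet> i) (p \<bullet> i) = 0" using bump_pos bump_nonneg
    by (metis less_eq_real_def)
  then show ?thesis unfolding Fbox_def using i by (intro prod_zero) auto
qed

lemma rhob_zero: "p \<notin> box c d \<Longrightarrow> rhob n c d p = 0"
proof -
  assume "p \<notin> box c d"
  then obtain i where i: "i \<in> Basis" "\<not> (c \<bullet> i < p \<bullet> i \<and> p \<bullet> i < d \<bullet> i)" by (auto simp: mem_box)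
  then have "bump (c \<bullet> i) (d \<bullet> i) (p \<bullet> i) = 0" using bump_pos bump_nonneg
    by (metis less_eq_real_def)
  then have "1 - (1 - bump (c \<bullet> i) (d \<bullet> i) (p \<bullet> i)) ^ n = 0" by simp
  then show ?thesis unfolding rhob_def using i by (intro prod_zero) auto
qed

lemma rhob_bounds: "0 \<le> rhob n c d p \<and> rhob n c d p \<le> 1"
proof -
  have "0 \<le> 1 - (1 - bump (c \<bullet> i) (d \<bullet> i) (p \<bullet> i)) ^ n \<and> 1 - (1 - bump (c \<bullet> i) (d \<bullet> i) (p \<bullet> i)) ^ n \<le> 1" for i
    using bump_nonneg[of "c \<bullet> i" "d \<bullet> i" "p \<bullet> i"] bump_le1[of "c \<bullet> i" "d \<bullet> i" "p \<bullet> i"]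
    by (auto intro!: power_le_one zero_le_power)
  then show ?thesis unfolding rhob_def by (auto intro!: prod_nonneg prod_le_1)
qed

lemma rhob_lim: "(\<lambda>n. rhob n c d p) \<longlonglongrightarrow> indicator (box c d) p"
proof (cases "p \<in> box c d")
  case True
  have "(\<lambda>n. 1 - (1 - bump (c \<bullet> i) (d \<bullet> i) (p \<bullet> i)) ^ n) \<longlonglongrightarrow> 1" if i: "i \<in> Basis" for i
  proof -
    have "0 < bump (c \<bullet> i) (d \<bullet> i) (p \<bullet> i)" using True i by (auto simp: bump_pos mem_box)
    then have "\<bar>1 - bump (c \<bullet> i) (d \<bullet> i) (p \<bullet> i)\<bar> < 1" using bump_le1[of "c \<bullet> i" "d \<bullet> i" "p \<bullet> i"] by auto
    then have "(\<lambda>n. (1 - bump (c \<bullet> i) (d \<bullet> i) (p \<bullet> i)) ^ n) \<longlonglongrightarrow> 0" by (intro LIMSEQ_power_zero) simp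
    from tendsto_diff[OF tendsto_const this, of 1] show ?thesis by simp
  qed
  then have "(\<lambda>n. rhob n c d p) \<longlonglongrightarrow> (\<Prod>i\<in>(Basis::'a set). 1)"
    unfolding rhob_def by (intro tendsto_prod) auto
  then show ?thesis using True by simp
next
  case False
  then show ?thesis by (simp add: rhob_zero)
qed

lemma borel_lint_zero:
  fixes f0 :: "'a::euclidean_space \<Rightarrow> real"
  assumes int: "integrable lebesgue f0"
    and boxes: "\<And>c d. (LINT x:box c d|lebesgue. f0 x) = 0"
    and tot: "(LINT x|lebesgue. f0 x) = 0"
    and A: "A \<in> sets borel"
  shows "(LINT x:A|lebesgue. f0 x) = 0"
proof -
  have si: "set_integrable lebesgue B f0" if "B \<in> sets borel" for B
    unfolding set_integrable_def using that int by (intro integrable_mult_indicator) auto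
  have 3: "A \<in> sigma_sets UNIV (range (\<lambda>(a, b). box a b))"
    using A unfolding borel_eq_box by simp
  have 1: "Int_stable (range (\<lambda>(a, b). box a (b::'a)))"
    by (auto simp: Int_stable_def box_Int_box)
  have 2: "range (\<lambda>(a, b). box a (b::'a)) \<subseteq> Pow UNIV" by auto
  from 1 2 3 show ?thesis
  proof (induction rule: sigma_sets_induct_disjoint)
    case (basic A) then show ?case using boxes by auto
  next
    case empty then show ?case by (simp add: set_lebesgue_integral_def)
  next
    case (compl A)
    have Ab: "A \<in> sets borel" using compl(1) unfolding borel_eq_box by simp
    have "(LINT x:(UNIV - A)|lebesgue. f0 x) = (LINT x|lebesgue. f0 x - indicator A x *\<^sub>R f0 x)"
      unfolding set_lebesgue_integral_def
      by (intro Bochner_Integration.integral_cong) (auto simp: indicator_def)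
    also have "\<dots> = (LINT x|lebesgue. f0 x) - (LINT x:A|lebesgue. f0 x)"
      unfolding set_lebesgue_integral_def
      using int si[OF Ab] unfolding set_integrable_def by (rule Bochner_Integration.integral_diff)
    finally show ?case using tot compl(2) by simp
  next
    case (union A)
    have Ab: "A i \<in> sets borel" for i using union(2) unfolding borel_eq_box by auto
    have "(\<lambda>k. LINT x:(\<Union>i<k. A i)|lebesgue. f0 x) \<longlonglongrightarrow> (LINT x:(\<Union>k. \<Union>i<k. A i)|lebesgue. f0 x)"
    proof (rule set_integral_cont_up)
      show "(\<Union>i<k. A i) \<in> sets lebesgue" for k using Ab by (intro sets.finite_UN) auto
      show "incseq (\<lambda>k. \<Union>i<k. A i)" by (force simp: incseq_def)
      show "set_integrable lebesgue (\<Union>k. \<Union>i<k. A i) f0" using Ab by (intro si) auto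
    qed
    moreover have "(LINT x:(\<Union>i<k. A i)|lebesgue. f0 x) = 0" for k
    proof -
      have "(LINT x:(\<Union>i\<in>{..<k}. A i)|lebesgue. f0 x) = (\<Sum>i\<in>{..<k}. LINT x:A i|lebesgue. f0 x)"
      proof (rule set_integral_finite_Union)
        show "disjoint_family_on A {..<k}" using union(1) by (rule disjoint_family_on_mono[rotated]) simp
        show "set_integrable lebesgue (A i) f0" for i using si Ab by blast
        show "A i \<in> sets lebesgue" for i using Ab by simp
      qed simp
      then show ?thesis using union(3) by simp
    qed
    moreover have "(\<Union>k. \<Union>i<k. A i) = (\<Union>i. A i)" by auto
    ultimately have "(\<lambda>k. 0) \<longlonglongrightarrow> (LINT x:(\<Union>i. A i)|lebesgue. f0 x)" by simp
    then show ?case using LIMSEQ_unique[OF _ tendsto_const] by metis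
  qed
qed

lemma lint_zero_ae:
  fixes f0 :: "'a::euclidean_space \<Rightarrow> real"
  assumes int: "integrable lebesgue f0"
    and Z: "\<And>A. A \<in> sets borel \<Longrightarrow> (LINT x:A|lebesgue. f0 x) = 0"
  shows "AE x in lebesgue. f0 x = 0"
proof -
  have [measurable]: "f0 \<in> borel_measurable lebesgue" using int by auto
  have gen: "(LINT x:A|lebesgue. f0 x) = 0" if A: "A \<in> sets lebesgue" for A
  proof -
    obtain S N N' where SN: "A = S \<union> N" "N \<subseteq> N'" "N' \<in> null_sets lborel" "S \<in> sets lborel"
      using sets_completionE[OF A] by metis
    have "AE x in lborel. x \<notin> N'" using SN(3) by (rule AE_not_in)
    then have "AE x in lebesgue. x \<notin> N'" by (rule AE_completion)
    then have "AE x in lebesgue. indicator A x *\<^sub>R f0 x = indicator S x *\<^sub>R f0 x"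
      by eventually_elim (use SN in \<open>auto simp: indicator_def\<close>)
    moreover have "S \<in> sets lebesgue" using SN(4) by auto
    ultimately have "(LINT x:A|lebesgue. f0 x) = (LINT x:S|lebesgue. f0 x)"
      unfolding set_lebesgue_integral_def using A
      by (intro integral_cong_AE) auto
    also have "\<dots> = 0" using SN(4) Z by simp
    finally show ?thesis .
  qed
  have "{x \<in> space lebesgue. 0 < f0 x} \<in> sets lebesgue" by measurable
  then have A1: "{x. 0 < f0 x} \<in> sets lebesgue" by simp
  have "{x \<in> space lebesgue. f0 x < 0} \<in> sets lebesgue" by measurable
  then have A2: "{x. f0 x < 0} \<in> sets lebesgue" by simp
  have "(LINT x|lebesgue. indicator {x. 0 < f0 x} x *\<^sub>R f0 x) = 0"
    using gen[OF A1] by (simp add: set_lebesgue_integral_def)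
  moreover have "integrable lebesgue (\<lambda>x. indicator {x. 0 < f0 x} x *\<^sub>R f0 x)"
    using A1 int by (rule integrable_mult_indicator)
  ultimately have "AE x in lebesgue. indicator {x. 0 < f0 x} x *\<^sub>R f0 x = 0"
    using integral_nonneg_eq_0_iff_AE[of lebesgue "\<lambda>x. indicator {x. 0 < f0 x} x *\<^sub>R f0 x"]
    by (simp add: indicator_def)
  moreover
  have "(LINT x|lebesgue. indicator {x. f0 x < 0} x *\<^sub>R (- f0 x)) = 0"
    using gen[OF A2] by (simp add: set_lebesgue_integral_def)
  moreover have "integrable lebesgue (\<lambda>x. indicator {x. f0 x < 0} x *\<^sub>R (- f0 x))"
    using A2 int by (intro integrable_mult_indicator) auto
  ultimately have "AE x in lebesgue. indicator {x. f0 x < 0} x *\<^sub>R (- f0 x) = 0"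
    using integral_nonneg_eq_0_iff_AE[of lebesgue "\<lambda>x. indicator {x. f0 x < 0} x *\<^sub>R (- f0 x)"]
    by (simp add: indicator_def)
  with \<open>AE x in lebesgue. indicator {x. 0 < f0 x} x *\<^sub>R f0 x = 0\<close>
  show ?thesis by eventually_elim (auto simp: indicator_def split: if_splits)
qed

lemma alg_Gq_cont: "f \<in> alg Gq \<Longrightarrow> continuous_on UNIV f"
  using alg_smooth_set[OF Gq_ok] unfolding smooth_set_def
  by (meson differentiable_at_imp_differentiable_on differentiable_imp_continuous_on)

lemma alg_Gq_meas: "f \<in> alg Gq \<Longrightarrow> f \<in> borel_measurable lebesgue"
  using continuous_imp_measurable_on_sets_lebesgue[of UNIV f] alg_Gq_cont[of f]
  by (simp add: lebesgue_on_UNIV_eq)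

lemma cbox_sub_big:
  fixes a b :: "'a::euclidean_space"
  assumes "\<forall>i\<in>Basis. a \<bullet> i < b \<bullet> i"
  shows "cbox a b \<subseteq> box ((2::real) *\<^sub>R a - b) (2 *\<^sub>R b - a)"
  using assms by (auto simp: mem_box inner_diff_left) (smt (verit))+

definition gbox :: "'a::euclidean_space set \<Rightarrow> 'a \<Rightarrow> 'a \<Rightarrow> bool" where
  "gbox U a b \<longleftrightarrow> (\<forall>i\<in>Basis. a \<bullet> i < b \<bullet> i) \<and> cbox ((2::real) *\<^sub>R a - b) (2 *\<^sub>R b - a) \<subseteq> U"

context
  fixes g :: "'a::euclidean_space \<Rightarrow> real" and U :: "'a set"
  assumes key: "\<And>m c d. m \<in> alg Gq \<Longrightarrow> (\<And>p. p \<notin> box c d \<Longrightarrow> m p = 0) \<Longrightarrow> cbox c d \<subseteq> U \<Longrightarrow>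
        integrable lebesgue (\<lambda>p. g p * m p) \<and> (\<integral>p. g p * m p \<partial>lebesgue) = 0"
begin

lemma L1:
  assumes gb: "gbox U a b"
  shows "integrable lebesgue (\<lambda>p. g p * indicator (cbox a b) p)"
proof -
  define F where "F = Fbox ((2::real) *\<^sub>R a - b) (2 *\<^sub>R b - a)"
  have Falg: "F \<in> alg Gq" unfolding F_def by (rule Fbox_alg)
  have intF: "integrable lebesgue (\<lambda>p. g p * F p)"
    using key[OF Falg, of "(2::real) *\<^sub>R a - b" "2 *\<^sub>R b - a"] gb unfolding gbox_def F_def
    by (auto simp: Fbox_zero)
  have sub: "cbox a b \<subseteq> box ((2::real) *\<^sub>R a - b) (2 *\<^sub>R b - a)"
    using gb cbox_sub_big unfolding gbox_def by blast
  have Fpos: "p \<in> cbox a b \<Longrightarrow> 0 < F p" for p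
    using sub Fbox_pos unfolding F_def by blast
  have ne: "cbox a b \<noteq> {}" using gb unfolding gbox_def by (auto simp: box_ne_empty less_imp_le)
  obtain x0 where x0: "x0 \<in> cbox a b" "\<And>y. y \<in> cbox a b \<Longrightarrow> F x0 \<le> F y"
    using continuous_attains_inf[OF compact_cbox ne continuous_on_subset[OF alg_Gq_cont[OF Falg]]] by auto
  define \<delta> where "\<delta> = F x0"
  have dpos: "0 < \<delta>" using Fpos x0 unfolding \<delta>_def by auto
  have eq: "(\<lambda>p. g p * indicator (cbox a b) p) = (\<lambda>p. (g p * F p) * (indicator (cbox a b) p / F p))"
    using Fpos by (auto simp: indicator_def fun_eq_iff) (metis less_irrefl)
  have m1: "F \<in> borel_measurable lebesgue" using alg_Gq_meas[OF Falg] .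
  have m2: "(\<lambda>p. g p * F p) \<in> borel_measurable lebesgue" using intF by auto
  have m3: "indicator (cbox a b) \<in> borel_measurable lebesgue"
    by (rule borel_measurable_indicator) simp
  have meas: "(\<lambda>p. g p * indicator (cbox a b) p) \<in> borel_measurable lebesgue"
    unfolding eq by (intro borel_measurable_times borel_measurable_divide m1 m2 m3)
  show ?thesis
  proof (rule Bochner_Integration.integrable_bound[OF _ meas])
    show "integrable lebesgue (\<lambda>p. g p * F p / \<delta>)" using intF by simp
    show "AE x in lebesgue. norm (g x * indicator (cbox a b) x) \<le> norm (g x * F x / \<delta>)"
    proof (intro AE_I2)
      fix x show "norm (g x * indicator (cbox a b) x) \<le> norm (g x * F x / \<delta>)"
      proof (cases "x \<in> cbox a b")
        case True
        then have "\<delta> \<le> F x" using x0 unfolding \<delta>_def by auto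
        then have "1 \<le> F x / \<delta>" using dpos by simp
        then have "\<bar>g x\<bar> * 1 \<le> \<bar>g x\<bar> * (F x / \<delta>)" by (intro mult_left_mono) auto
        then show ?thesis using True dpos Fpos[OF True] by (simp add: abs_mult)
      qed simp
    qed
  qed
qed

lemma L2:
  assumes gb: "gbox U a b"
  shows "(LINT p:box c d|lebesgue. g p * indicator (box a b) p) = 0"
proof -
  define c' :: 'a where "c' = (\<Sum>i\<in>Basis. max (a\<bullet>i) (c\<bullet>i) *\<^sub>R i)"
  define d' :: 'a where "d' = (\<Sum>i\<in>Basis. min (b\<bullet>i) (d\<bullet>i) *\<^sub>R i)"
  have bi: "box a b \<inter> box c d = box c' d'" unfolding c'_def d'_def by (rule box_Int_box)
  have cs: "cbox c' d' \<subseteq> cbox a b"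
    unfolding c'_def d'_def by (auto simp: mem_box inner_sum_left_Basis)
  have big: "cbox a b \<subseteq> U" using gb cbox_sub_big[of a b] box_subset_cbox unfolding gbox_def by blast
  have L1': "integrable lebesgue (\<lambda>p. g p * indicator (cbox a b) p)" using L1[OF gb] .
  have K: "integrable lebesgue (\<lambda>p. g p * rhob n c' d' p) \<and> (\<integral>p. g p * rhob n c' d' p \<partial>lebesgue) = 0" for n
    using key[OF rhob_alg] rhob_zero cs big by blast
  have eq: "(\<lambda>p. indicator (box c d) p *\<^sub>R (g p * indicator (box a b) p)) = (\<lambda>p. g p * indicator (box c' d') p)"
    using bi[symmetric] by (auto simp: indicator_def fun_eq_iff)
  have bsub: "box c' d' \<subseteq> cbox a b" using cs box_subset_cbox by blast
  have eq2: "(\<lambda>p. g p * indicator (box c' d') p) = (\<lambda>p. (g p * indicator (cbox a b) p) * indicator (box c' d') p)"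
    using bsub by (auto simp: indicator_def fun_eq_iff)
  have [measurable]: "(\<lambda>p. g p * indicator (cbox a b) p) \<in> borel_measurable lebesgue" using L1' by auto
  have "(\<lambda>n. \<integral>p. g p * rhob n c' d' p \<partial>lebesgue) \<longlonglongrightarrow> (\<integral>p. g p * indicator (box c' d') p \<partial>lebesgue)"
  proof (rule integral_dominated_convergence[where w="\<lambda>p. norm (g p * indicator (cbox a b) p)"])
    have m2: "indicator (box c' d') \<in> borel_measurable lebesgue"
      by (rule borel_measurable_indicator) simp
    show "(\<lambda>p. g p * indicator (box c' d') p) \<in> borel_measurable lebesgue"
      unfolding eq2 using borel_measurable_times[OF _ m2] L1' by auto
    show "(\<lambda>p. g p * rhob n c' d' p) \<in> borel_measurable lebesgue" for n using K[of n] by auto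
    show "integrable lebesgue (\<lambda>p. norm (g p * indicator (cbox a b) p))" using L1' by auto
    show "AE p in lebesgue. (\<lambda>n. g p * rhob n c' d' p) \<longlonglongrightarrow> g p * indicator (box c' d') p"
      by (intro AE_I2 tendsto_mult_left rhob_lim)
    show "AE p in lebesgue. norm (g p * rhob n c' d' p) \<le> norm (g p * indicator (cbox a b) p)" for n
    proof (intro AE_I2)
      fix p show "norm (g p * rhob n c' d' p) \<le> norm (g p * indicator (cbox a b) p)"
      proof (cases "p \<in> box c' d'")
        case True
        then have "p \<in> cbox a b" using bsub by auto
        then show ?thesis using rhob_bounds[of n c' d' p]
          by (auto simp: abs_mult intro!: mult_left_le)
      qed (simp add: rhob_zero)
    qed
  qed
  then have "(\<integral>p. g p * indicator (box c' d') p \<partial>lebesgue) = 0"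
    using K LIMSEQ_unique[OF _ tendsto_const] by simp
  then show ?thesis unfolding set_lebesgue_integral_def eq .
qed

lemma gbox_ae:
  assumes gb: "gbox U a b"
  shows "AE p in lebesgue. p \<in> box a b \<longrightarrow> g p = 0"
proof -
  define f0 where "f0 = (\<lambda>p. g p * indicator (box a b) p)"
  have eq: "f0 = (\<lambda>p. indicator (box a b) p *\<^sub>R (g p * indicator (cbox a b) p))"
    unfolding f0_def using box_subset_cbox[of a b] by (auto simp: indicator_def fun_eq_iff)
  have int: "integrable lebesgue f0" unfolding eq
    by (intro integrable_mult_indicator L1[OF gb]) auto
  have boxes: "(LINT x:box c d|lebesgue. f0 x) = 0" for c d unfolding f0_def using L2[OF gb] .
  have tot: "(LINT x|lebesgue. f0 x) = 0"
  proof -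
    have "(LINT x|lebesgue. f0 x) = (LINT x:box a b|lebesgue. f0 x)"
      unfolding set_lebesgue_integral_def f0_def
      by (intro Bochner_Integration.integral_cong) (auto simp: indicator_def)
    then show ?thesis using boxes by simp
  qed
  have "AE x in lebesgue. f0 x = 0"
    by (rule lint_zero_ae[OF int borel_lint_zero[OF int boxes tot]])
  then show ?thesis by eventually_elim (auto simp: f0_def indicator_def)
qed

lemma fundamental:
  assumes U: "open U"
  shows "AE p in lebesgue. p \<in> U \<longrightarrow> g p = 0"
proof -
  define \<F> where "\<F> = {box a b | a b. gbox U a b}"
  obtain \<F>' where F': "\<F>' \<subseteq> \<F>" "countable \<F>'" "\<Union>\<F>' = \<Union>\<F>"
    using Lindelof[of \<F>] unfolding \<F>_def by auto
  have UF: "\<Union>\<F> = U"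
  proof
    show "\<Union>\<F> \<subseteq> U" unfolding \<F>_def gbox_def using cbox_sub_big box_subset_cbox by blast
  next
    show "U \<subseteq> \<Union>\<F>"
    proof
      fix x assume "x \<in> U"
      then obtain e where e: "e > 0" "ball x e \<subseteq> U" using U open_contains_ball by blast
      define \<delta> where "\<delta> = e / (4 * real DIM('a))"
      have dpos: "\<delta> > 0" unfolding \<delta>_def using e by auto
      define a where "a = x - \<delta> *\<^sub>R One"
      define b where "b = x + \<delta> *\<^sub>R One"
      have ab: "\<forall>i\<in>Basis. a \<bullet> i < b \<bullet> (i::'a)" unfolding a_def b_def using dpos
        by (auto simp: inner_diff_left inner_add_left)
      have "cbox ((2::real) *\<^sub>R a - b) (2 *\<^sub>R b - a) \<subseteq> ball x e"
      proof
        fix y assume y: "y \<in> cbox ((2::real) *\<^sub>R a - b) (2 *\<^sub>R b - a)"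
        have "\<bar>(x - y) \<bullet> i\<bar> \<le> 3 * \<delta>" if i: "i \<in> Basis" for i
          using y i unfolding a_def b_def mem_box
          by (auto simp: inner_diff_left inner_add_left algebra_simps)
        then have "(\<Sum>i\<in>Basis. \<bar>(x - y) \<bullet> i\<bar>) \<le> (\<Sum>i\<in>(Basis::'a set). 3 * \<delta>)"
          by (intro sum_mono) auto
        also have "\<dots> = 3 * e / 4" unfolding \<delta>_def by simp
        finally have "norm (x - y) \<le> 3 * e / 4" using norm_le_l1[of "x - y"] by linarith
        then show "y \<in> ball x e" using e by (simp add: dist_norm)
      qed
      then have "gbox U a b" unfolding gbox_def using ab e by blast
      moreover have "x \<in> box a b" unfolding a_def b_def mem_box using dpos
        by (auto simp: inner_diff_left inner_add_left)
      ultimately show "x \<in> \<Union>\<F>" unfolding \<F>_def by blast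
    qed
  qed
  have "\<forall>B\<in>\<F>'. AE p in lebesgue. p \<in> B \<longrightarrow> g p = 0"
    using F'(1) gbox_ae unfolding \<F>_def by blast
  then have "AE p in lebesgue. \<forall>B\<in>\<F>'. p \<in> B \<longrightarrow> g p = 0"
    using AE_ball_countable[OF F'(2), where M=lebesgue and P="\<lambda>p B. p \<in> B \<longrightarrow> g p = 0"] by simp
  then show ?thesis by eventually_elim (use F'(3) UF in blast)
qed

end

lemma dd_zero: "dd w (\<lambda>x::'a::real_normed_vector. 0::'b::real_normed_vector) = (\<lambda>x. 0)"
  unfolding dd_def by simp

lemma iter_dd_zero: "iter_dd ws (\<lambda>x::'a::real_normed_vector. 0::'b::real_normed_vector) = (\<lambda>x. 0)"
  by (induction ws) (simp_all add: dd_zero)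

lemma C_inf_zero: "C_inf (\<lambda>x::'a::euclidean_space. 0::'b::euclidean_space)"
  unfolding C_inf_def Ck_def by (simp add: iter_dd_zero)

lemma test_ST_zero: "test_ST \<Omega> T (\<lambda>x t. 0::'b::euclidean_space)"
  unfolding test_ST_def
  using C_inf_zero by (auto intro!: exI[of _ "{}"] simp: case_prod_beta')

lemma test_ST_div_zero: "test_ST_div \<Omega> T (\<lambda>x t. 0)"
  unfolding test_ST_div_def using test_ST_zero by (simp add: cpdx_def)

lemma test_ST_symTr_zero: "test_ST_symTr \<Omega> T (\<lambda>x t. 0)"
  unfolding test_ST_symTr_def using test_ST_zero
  by (simp add: symTr_def transpose_def trace_def vec_eq_iff)

lemma EV_integrand_split:
  "EV_integrand \<Omega> \<gamma> \<rho>1 \<rho>2 \<nu> \<eta> m Wdw v S \<phi> \<mu> \<beta> vt St pt mt x \<tau> =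
   EV_integrand \<Omega> \<gamma> \<rho>1 \<rho>2 \<nu> \<eta> m Wdw v S \<phi> \<mu> \<beta> vt St pt (\<lambda>x t. 0) x \<tau>
   - (\<mu> x \<tau> - (- wlap \<Omega> (\<lambda>y. \<phi> y \<tau>) x + deriv Wdw (\<phi> x \<tau>) + \<beta> x \<tau>)) * mt x \<tau>"
  unfolding EV_integrand_def Let_def by simp

lemma ereal_aux: "ereal x + enn2ereal p \<le> ereal y \<Longrightarrow> x \<le> y"
proof -
  assume a: "ereal x + enn2ereal p \<le> ereal y"
  have b: "ereal x \<le> ereal x + enn2ereal p" by (intro add_increasing2) auto
  show "x \<le> y" using order_trans[OF b a] by simp
qed

lemma EV_ineq_zero:
  assumes ev: "EV_ineq \<Omega> \<gamma> \<rho>1 \<rho>2 \<nu> \<eta> m P Wdw W f K v S \<phi> \<mu> E \<beta> (\<lambda>x t. 0) (\<lambda>x t. 0) (\<lambda>x t. 0) mt s t"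
    and Kz: "\<And>\<tau>. K (\<lambda>x t. 0) (\<lambda>x t. 0) (\<lambda>x t. 0) mt \<tau> = 0"
    and P0: "\<forall>x\<in>\<Omega>. \<forall>y. P x y 0 = 0"
  shows "integrable (lebesgue_on (\<Omega> \<times> {s..t}))
            (\<lambda>(x,\<tau>). EV_integrand \<Omega> \<gamma> \<rho>1 \<rho>2 \<nu> \<eta> m Wdw v S \<phi> \<mu> \<beta> (\<lambda>x t. 0) (\<lambda>x t. 0) (\<lambda>x t. 0) mt x \<tau>)
       \<and> E t - E s + (\<integral>p. (\<lambda>(x,\<tau>). EV_integrand \<Omega> \<gamma> \<rho>1 \<rho>2 \<nu> \<eta> m Wdw v S \<phi> \<mu> \<beta> (\<lambda>x t. 0) (\<lambda>x t. 0) (\<lambda>x t. 0) mt x \<tau>) p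
              \<partial>lebesgue_on (\<Omega> \<times> {s..t}))
          \<le> (\<integral>\<tau>. f \<tau> (\<lambda>x. v x \<tau>) \<partial>lebesgue_on {s..t})"
proof -
  have PSt: "(\<integral>\<^sup>+\<tau>. (\<integral>\<^sup>+x. P x (\<phi> x \<tau>) 0 \<partial>lebesgue_on \<Omega>) \<partial>lebesgue_on {s..t}) = 0"
  proof -
    have "(\<integral>\<^sup>+x. P x (\<phi> x \<tau>) 0 \<partial>lebesgue_on \<Omega>) = 0" for \<tau>
      using nn_integral_cong[of "lebesgue_on \<Omega>" "\<lambda>x. P x (\<phi> x \<tau>) 0" "\<lambda>x. 0"] P0 by simp
    then show ?thesis by simp
  qed
  from ev show ?thesis
    unfolding EV_ineq_def Let_def using PSt Kz
    by (auto simp: zero_ennreal.rep_eq dest!: ereal_aux)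
qed

definition gfun :: "(real^3) set \<Rightarrow> (real \<Rightarrow> real) \<Rightarrow> (real^3 \<Rightarrow> real \<Rightarrow> real) \<Rightarrow> (real^3 \<Rightarrow> real \<Rightarrow> real)
   \<Rightarrow> (real^3 \<Rightarrow> real \<Rightarrow> real) \<Rightarrow> (real^3) \<times> real \<Rightarrow> real" where
  "gfun \<Omega> Wdw \<phi> \<mu> \<beta> p = \<mu> (fst p) (snd p) - (- wlap \<Omega> (\<lambda>y. \<phi> y (snd p)) (fst p) + deriv Wdw (\<phi> (fst p) (snd p)) + \<beta> (fst p) (snd p))"

lemma Omega_times_sets: "open (\<Omega>::(real^3) set) \<Longrightarrow> B \<in> sets borel \<Longrightarrow> \<Omega> \<times> B \<in> sets (lebesgue :: ((real^3) \<times> real) measure)"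
proof -
  assume "open \<Omega>" "B \<in> sets borel"
  then have "\<Omega> \<times> B \<in> sets (borel \<Otimes>\<^sub>M borel)" by (intro pair_measureI) auto
  then have "\<Omega> \<times> B \<in> sets (borel :: ((real^3) \<times> real) measure)" by (simp only: borel_prod)
  then show ?thesis by simp
qed

lemma tint_borel: "tint T \<in> sets borel"
proof -
  have "tint T = (case T of ereal r \<Rightarrow> {0..<r} | PInfty \<Rightarrow> {0..} | MInfty \<Rightarrow> {})"
    unfolding tint_def by (cases T) auto
  then show ?thesis by (cases T) auto
qed

lemma null_interval: "N \<in> null_sets lebesgue \<Longrightarrow> {(a::real)<..<b} \<subseteq> N \<Longrightarrow> b \<le> a"
proof -
  assume "N \<in> null_sets lebesgue" "{(a::real)<..<b} \<subseteq> N"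
  then have "negligible {a<..<b}" using negligible_iff_null_sets negligible_subset by blast
  then have "box a b = {}" using negligible_interval(2)[of a b] by (simp add: box_real(1))
  then show "b \<le> a" by (simp add: box_real(1))
qed

lemma lin_bound_zero:
  fixes A F I :: real
  assumes "\<And>k::int. A - real_of_int k * I \<le> F"
  shows "I = 0"
proof (rule ccontr)
  assume "I \<noteq> 0"
  then have "0 < \<bar>I\<bar>" by simp
  then obtain n :: nat where n: "F - A < real n * \<bar>I\<bar>" using reals_Archimedean3 by blast
  have "A - real_of_int (int n) * I \<le> F" "A - real_of_int (- int n) * I \<le> F" using assms by blast+
  then have "A + real n * \<bar>I\<bar> \<le> F" by (cases "I \<ge> 0") auto
  then show False using n by simp
qed

lemma key_lemma:
  fixes \<Omega> :: "(real^3) set" and T :: ereal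
    and mm :: "(real^3) \<times> real \<Rightarrow> real" and c d :: "(real^3) \<times> real"
    and K :: "(real^3 \<Rightarrow> real \<Rightarrow> real^3) \<Rightarrow> (real^3 \<Rightarrow> real \<Rightarrow> real^3^3) \<Rightarrow> (real^3 \<Rightarrow> real \<Rightarrow> real)
              \<Rightarrow> (real^3 \<Rightarrow> real \<Rightarrow> real) \<Rightarrow> real \<Rightarrow> real"
    and v :: "real^3 \<Rightarrow> real \<Rightarrow> real^3" and S :: "real^3 \<Rightarrow> real \<Rightarrow> real^3^3"
    and \<phi> \<mu> \<beta> :: "real^3 \<Rightarrow> real \<Rightarrow> real" and E :: "real \<Rightarrow> real"
    and P :: "real^3 \<Rightarrow> real \<Rightarrow> real^3^3 \<Rightarrow> ennreal"
  assumes \<Omega>o: "open \<Omega>"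
    and tests: "\<forall>mt. test_ST \<Omega> T mt \<longrightarrow> (\<exists>N. N \<in> null_sets lebesgue \<and>
           (\<forall>s t. s \<in> {0} \<union> (tint T - N) \<and> t \<in> tint T - N \<and> s < t \<longrightarrow>
              EV_ineq \<Omega> \<gamma> \<rho>1 \<rho>2 \<nu> \<eta> m P Wdw W f K v S \<phi> \<mu> E \<beta> (\<lambda>x t. 0) (\<lambda>x t. 0) (\<lambda>x t. 0) mt s t))"
    and Kz: "\<And>mt \<tau>. test_ST \<Omega> T mt \<Longrightarrow> K (\<lambda>x t. 0) (\<lambda>x t. 0) (\<lambda>x t. 0) mt \<tau> = 0"
    and P0: "\<forall>x\<in>\<Omega>. \<forall>y. P x y 0 = 0"
    and mm: "mm \<in> alg Gq" and van: "\<And>p. p \<notin> box c d \<Longrightarrow> mm p = 0"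
    and sub: "cbox c d \<subseteq> {p. fst p \<in> \<Omega> \<and> 0 < snd p \<and> ereal (snd p) < T}"
  shows "integrable lebesgue (\<lambda>p. gfun \<Omega> Wdw \<phi> \<mu> \<beta> p * mm p) \<and> (\<integral>p. gfun \<Omega> Wdw \<phi> \<mu> \<beta> p * mm p \<partial>lebesgue) = 0"
proof (cases "box c d = {}")
  case True
  then have "mm = (\<lambda>p. 0)" using van by auto
  then show ?thesis by simp
next
  case False
  let ?g = "gfun \<Omega> Wdw \<phi> \<mu> \<beta>"
  have "d \<in> cbox c d" using False by (auto simp: box_ne_empty mem_box less_imp_le)
  then have d: "0 < snd d" "ereal (snd d) < T" using sub by auto
  define mt where "mt = (\<lambda>(k::int) x t. real_of_int k * mm (x, t))"
  have tk: "test_ST \<Omega> T (mt k)" for k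
  proof -
    have e: "(\<lambda>(x,t). mt k x t) = (\<lambda>p. real_of_int k * mm p)" by (auto simp: mt_def fun_eq_iff)
    have "(\<lambda>p. real_of_int k * mm p) \<in> alg Gq" using mm by (intro alg.mult alg.const)
    then have "C_inf (\<lambda>(x,t). mt k x t)" unfolding e by (intro smooth_C_inf alg_Gq_smooth)
    moreover have "cbox c d \<subseteq> \<Omega> \<times> tint T" using sub by (auto simp: tint_def less_imp_le)
    moreover have "\<forall>x t. 0 \<le> t \<and> (x,t) \<notin> cbox c d \<longrightarrow> mt k x t = 0"
      using van box_subset_cbox unfolding mt_def by fastforce
    ultimately show ?thesis unfolding test_ST_def by (intro conjI exI[of _ "cbox c d"]) auto
  qed
  obtain N where N: "\<And>k. N k \<in> null_sets lebesgue"
    "\<And>k s t. s \<in> {0} \<union> (tint T - N k) \<Longrightarrow> t \<in> tint T - N k \<Longrightarrow> s < t \<Longrightarrow>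
       EV_ineq \<Omega> \<gamma> \<rho>1 \<rho>2 \<nu> \<eta> m P Wdw W f K v S \<phi> \<mu> E \<beta> (\<lambda>x t. 0) (\<lambda>x t. 0) (\<lambda>x t. 0) (mt k) s t"
    using tests[rule_format, OF tk] by metis
  define NN where "NN = (\<Union>k. N k)"
  have NN: "NN \<in> null_sets lebesgue" unfolding NN_def using N(1) by (intro null_sets_UN') auto
  obtain t1 where t1: "snd d < t1" "ereal t1 < T" using ereal_dense2[OF d(2)] by auto
  have "\<not> {snd d<..<t1} \<subseteq> NN"
  proof
    assume "{snd d<..<t1} \<subseteq> NN"
    then have "t1 \<le> snd d" by (rule null_interval[OF NN])
    with t1(1) show False by simp
  qed
  then obtain t where t: "t \<in> {snd d<..<t1}" "t \<notin> NN" by blast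
  have "ereal t < ereal t1" using t by simp
  then have "ereal t < T" using t1(2) by (rule less_trans)
  then have tT: "t \<in> tint T" "0 < t" using t d unfolding tint_def by auto
  have EV: "EV_ineq \<Omega> \<gamma> \<rho>1 \<rho>2 \<nu> \<eta> m P Wdw W f K v S \<phi> \<mu> E \<beta> (\<lambda>x t. 0) (\<lambda>x t. 0) (\<lambda>x t. 0) (mt k) 0 t" for k
    using N(2)[of 0 k t] tT t(2) unfolding NN_def by auto
  define Z where "Z = (\<lambda>(x,\<tau>). EV_integrand \<Omega> \<gamma> \<rho>1 \<rho>2 \<nu> \<eta> m Wdw v S \<phi> \<mu> \<beta> (\<lambda>x t. 0) (\<lambda>x t. 0) (\<lambda>x t. 0) (\<lambda>x t. 0) x \<tau>)"
  have split: "(\<lambda>(x,\<tau>). EV_integrand \<Omega> \<gamma> \<rho>1 \<rho>2 \<nu> \<eta> m Wdw v S \<phi> \<mu> \<beta> (\<lambda>x t. 0) (\<lambda>x t. 0) (\<lambda>x t. 0) (mt k) x \<tau>)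
      = (\<lambda>p. Z p - real_of_int k * (?g p * mm p))" for k
  proof
    fix p :: "(real^3) \<times> real"
    obtain x \<tau> where p: "p = (x, \<tau>)" by (cases p)
    show "(\<lambda>(x,\<tau>). EV_integrand \<Omega> \<gamma> \<rho>1 \<rho>2 \<nu> \<eta> m Wdw v S \<phi> \<mu> \<beta> (\<lambda>x t. 0) (\<lambda>x t. 0) (\<lambda>x t. 0) (mt k) x \<tau>) p
      = Z p - real_of_int k * (?g p * mm p)"
    proof -
      have e1: "EV_integrand \<Omega> \<gamma> \<rho>1 \<rho>2 \<nu> \<eta> m Wdw v S \<phi> \<mu> \<beta> (\<lambda>x t. 0) (\<lambda>x t. 0) (\<lambda>x t. 0) (mt k) x \<tau> =
        EV_integrand \<Omega> \<gamma> \<rho>1 \<rho>2 \<nu> \<eta> m Wdw v S \<phi> \<mu> \<beta> (\<lambda>x t. 0) (\<lambda>x t. 0) (\<lambda>x t. 0) (\<lambda>x t. 0) x \<tau>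
        - (\<mu> x \<tau> - (- wlap \<Omega> (\<lambda>y. \<phi> y \<tau>) x + deriv Wdw (\<phi> x \<tau>) + \<beta> x \<tau>)) * mt k x \<tau>"
        by (rule EV_integrand_split)
      have g: "\<mu> x \<tau> - (- wlap \<Omega> (\<lambda>y. \<phi> y \<tau>) x + deriv Wdw (\<phi> x \<tau>) + \<beta> x \<tau>) = ?g (x, \<tau>)"
        by (simp add: gfun_def)
      have mk: "mt k x \<tau> = real_of_int k * mm (x, \<tau>)" by (simp add: mt_def)
      have ar: "\<And>A B C D::real. A - B * (C * D) = A - C * (B * D)" by simp
      show ?thesis unfolding p Z_def case_prod_conv e1 g mk by (rule ar)
    qed
  qed
  define Sd where "Sd = \<Omega> \<times> {0..t}"
  have Sd: "Sd \<in> sets lebesgue" unfolding Sd_def using \<Omega>o by (intro Omega_times_sets) auto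
  have R: "integrable (lebesgue_on Sd) (\<lambda>p. Z p - real_of_int k * (?g p * mm p)) \<and>
      E t - E 0 + (\<integral>p. Z p - real_of_int k * (?g p * mm p) \<partial>lebesgue_on Sd) \<le> (\<integral>\<tau>. f \<tau> (\<lambda>x. v x \<tau>) \<partial>lebesgue_on {0..t})" for k
  proof -
    note R1 = EV_ineq_zero[OF EV[of k], OF Kz[OF tk[of k]], OF P0]
    have R2: "integrable (lebesgue_on Sd) (\<lambda>p. Z p - real_of_int k * (?g p * mm p)) \<and>
      E t - E 0 + (\<integral>p. Z p - real_of_int k * (?g p * mm p) \<partial>lebesgue_on (\<Omega> \<times> {0..t})) \<le> (\<integral>\<tau>. f \<tau> (\<lambda>x. v x \<tau>) \<partial>lebesgue_on {0..t})"
      using R1 unfolding split[of k] Sd_def .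
    then show ?thesis unfolding Sd_def .
  qed
  have iZ: "integrable (lebesgue_on Sd) Z" using R[of 0] by simp
  have igm: "integrable (lebesgue_on Sd) (\<lambda>p. ?g p * mm p)"
  proof -
    have i1: "integrable (lebesgue_on Sd) (\<lambda>p. Z p - ?g p * mm p)" using R[of 1] by simp
    have "integrable (lebesgue_on Sd) (\<lambda>p. Z p - (Z p - ?g p * mm p))"
      by (rule Bochner_Integration.integrable_diff[OF iZ i1])
    then show ?thesis by simp
  qed
  have eqI: "(\<integral>p. Z p - real_of_int k * (?g p * mm p) \<partial>lebesgue_on Sd) =
      (\<integral>p. Z p \<partial>lebesgue_on Sd) - real_of_int k * (\<integral>p. ?g p * mm p \<partial>lebesgue_on Sd)" for k
  proof -
    have "(\<integral>p. Z p - real_of_int k * (?g p * mm p) \<partial>lebesgue_on Sd) =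
      (\<integral>p. Z p \<partial>lebesgue_on Sd) - (\<integral>p. real_of_int k * (?g p * mm p) \<partial>lebesgue_on Sd)"
      by (rule Bochner_Integration.integral_diff[OF iZ Bochner_Integration.integrable_mult_right[OF igm]])
    also have "(\<integral>p. real_of_int k * (?g p * mm p) \<partial>lebesgue_on Sd) = real_of_int k * (\<integral>p. ?g p * mm p \<partial>lebesgue_on Sd)"
      by (rule integral_mult_right_zero)
    finally show ?thesis .
  qed
  have "E t - E 0 + (\<integral>p. Z p \<partial>lebesgue_on Sd) - real_of_int k * (\<integral>p. ?g p * mm p \<partial>lebesgue_on Sd)
      \<le> (\<integral>\<tau>. f \<tau> (\<lambda>x. v x \<tau>) \<partial>lebesgue_on {0..t})" for k
  proof -
    have "E t - E 0 + (\<integral>p. Z p - real_of_int k * (?g p * mm p) \<partial>lebesgue_on Sd) \<le> (\<integral>\<tau>. f \<tau> (\<lambda>x. v x \<tau>) \<partial>lebesgue_on {0..t})"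
      using R[of k] by (rule conjunct2)
    then show ?thesis unfolding eqI by linarith
  qed
  then have I0: "(\<integral>p. ?g p * mm p \<partial>lebesgue_on Sd) = 0" by (rule lin_bound_zero)
  have b01: "(0::real^3, 1::real) \<in> Basis" by (simp add: Basis_prod_def)
  have ind: "indicator Sd p *\<^sub>R (?g p * mm p) = ?g p * mm p" for p
  proof (cases "p \<in> box c d")
    case True
    then have pc: "p \<in> cbox c d" using box_subset_cbox by blast
    then have "fst p \<in> \<Omega>" "0 < snd p" using sub by auto
    moreover have "p \<bullet> (0::real^3, 1::real) \<le> d \<bullet> (0, 1)" using pc b01 unfolding mem_box by blast
    then have "snd p \<le> snd d" by (cases p, cases d) (simp add: inner_prod_def)
    ultimately have "p \<in> Sd" using t unfolding Sd_def by (cases p) auto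
    then show ?thesis by simp
  next
    case False
    then show ?thesis by (simp add: van)
  qed
  have SdS: "Sd \<inter> space lebesgue \<in> sets lebesgue" using Sd by simp
  have int1: "integrable lebesgue (\<lambda>p. indicator Sd p *\<^sub>R (?g p * mm p))"
    using integrable_restrict_space[OF SdS, THEN iffD1, OF igm] .
  have int2: "integrable lebesgue (\<lambda>p. ?g p * mm p)"
    using int1 by (simp only: ind)
  have "(\<integral>p. ?g p * mm p \<partial>lebesgue_on Sd) = (\<integral>p. indicator Sd p *\<^sub>R (?g p * mm p) \<partial>lebesgue)"
    by (rule integral_restrict_space[OF SdS])
  also have "\<dots> = (\<integral>p. ?g p * mm p \<partial>lebesgue)" by (simp only: ind)
  finally have "(\<integral>p. ?g p * mm p \<partial>lebesgue) = 0" using I0 by simp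
  then show ?thesis using int2 by simp
qed

theorem mainTheorem3:
  fixes \<Omega> :: "(real^3) set" and T :: ereal and \<gamma> \<rho>1 \<rho>2 :: real
    and \<nu> \<eta> m Wdw Wsg :: "real \<Rightarrow> real"
    and P :: "real^3 \<Rightarrow> real \<Rightarrow> real^3^3 \<Rightarrow> ennreal"
    and sg :: bool
    and f :: "real \<Rightarrow> (real^3 \<Rightarrow> real^3) \<Rightarrow> real"
    and v0 :: "real^3 \<Rightarrow> real^3" and S0 :: "real^3 \<Rightarrow> real^3^3" and \<phi>0 :: "real^3 \<Rightarrow> real"
    and K :: "(real^3 \<Rightarrow> real \<Rightarrow> real^3) \<Rightarrow> (real^3 \<Rightarrow> real \<Rightarrow> real^3^3) \<Rightarrow> (real^3 \<Rightarrow> real \<Rightarrow> real)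
              \<Rightarrow> (real^3 \<Rightarrow> real \<Rightarrow> real) \<Rightarrow> real \<Rightarrow> real"
    and v :: "real^3 \<Rightarrow> real \<Rightarrow> real^3" and S :: "real^3 \<Rightarrow> real \<Rightarrow> real^3^3"
    and \<phi> \<mu> \<beta> :: "real^3 \<Rightarrow> real \<Rightarrow> real" and E :: "real \<Rightarrow> real"
  assumes "bounded_C2_domain \<Omega>"
    and "0 < T"
    and "\<gamma> \<ge> 0"
    and "assm_A1 \<rho>1 \<rho>2" and "assm_A2 \<nu> \<eta>" and "assm_A3 m" and "assm_A4 \<Omega> P"
    and "assm_A5 \<Omega> T v0 S0 f \<phi>0" and "assm_A6 Wdw" and "assm_A7 Wsg"
    and "reg_weight \<Omega> T K"
    and "\<And>mt \<tau>. test_ST \<Omega> T mt \<Longrightarrow> K (\<lambda>x t. 0) (\<lambda>x t. 0) (\<lambda>x t. 0) mt \<tau> = 0"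
    and "EV_solution \<Omega> T \<gamma> \<rho>1 \<rho>2 \<nu> \<eta> m P Wdw
           (if sg then Wsg else (\<lambda>_. 0)) (if sg then subdiff_sg Wsg else subdiff_ind)
           f v0 S0 \<phi>0 K v S \<phi> \<mu> E \<beta>"
  shows "AE p in lebesgue_on (\<Omega> \<times> tint T).
           \<mu> (fst p) (snd p) = - wlap \<Omega> (\<lambda>y. \<phi> y (snd p)) (fst p) + deriv Wdw (\<phi> (fst p) (snd p))
                                 + \<beta> (fst p) (snd p)
         \<and> (if sg then subdiff_sg Wsg else subdiff_ind) (\<phi> (fst p) (snd p)) (\<beta> (fst p) (snd p))"
proof -
  let ?dW = "if sg then subdiff_sg Wsg else subdiff_ind"
  let ?U = "{p::(real^3) \<times> real. fst p \<in> \<Omega> \<and> 0 < snd p \<and> ereal (snd p) < T}"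
  have \<Omega>o: "open \<Omega>" using assms(1) by (simp add: bounded_C2_domain_def)
  have sol: "let W = (\<lambda>y. Wdw y + (if sg then Wsg else (\<lambda>_. 0)) y) in
     Linf_loc \<Omega> T (L2_div \<Omega>) (L2norm \<Omega>) v \<and> L2_loc \<Omega> T (H1_0div \<Omega>) (H1norm \<Omega>) v \<and>
     Linf_loc \<Omega> T (L2_symTr \<Omega>) (L2norm \<Omega>) S \<and>
     (\<gamma> > 0 \<longrightarrow> L2_loc \<Omega> T (H1 \<Omega>) (H1norm \<Omega>) S) \<and>
     Linf_loc \<Omega> T (H1 \<Omega>) (H1norm \<Omega>) \<phi> \<and> L2_loc \<Omega> T (H2 \<Omega>) (H2norm \<Omega>) \<phi> \<and>
     (AE p in lebesgue_on (\<Omega> \<times> tint T). \<bar>\<phi> (fst p) (snd p)\<bar> \<le> 1) \<and>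
     L2_loc \<Omega> T (H1 \<Omega>) (H1norm \<Omega>) \<mu> \<and>
     BV_loc T E \<and>
     (AE \<tau> in lebesgue_on (tint T).
         E \<tau> \<ge> energy \<Omega> \<rho>1 \<rho>2 W (\<lambda>x. v x \<tau>) (\<lambda>x. S x \<tau>) (\<lambda>x. \<phi> x \<tau>)) \<and>
     (AE p in lebesgue_on (\<Omega> \<times> tint T). ?dW (\<phi> (fst p) (snd p)) (\<beta> (fst p) (snd p))) \<and>
     (\<forall>x\<in>\<Omega>. v x 0 = v0 x \<and> S x 0 = S0 x \<and> \<phi> x 0 = \<phi>0 x) \<and>
     (\<forall>vt St pt mt. test_ST_div \<Omega> T vt \<and> test_ST_symTr \<Omega> T St \<and> test_ST \<Omega> T pt \<and> test_ST \<Omega> T mt \<longrightarrow>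
        (\<exists>N. N \<in> null_sets lebesgue \<and>
           (\<forall>s t. s \<in> {0} \<union> (tint T - N) \<and> t \<in> tint T - N \<and> s < t \<longrightarrow>
              EV_ineq \<Omega> \<gamma> \<rho>1 \<rho>2 \<nu> \<eta> m P Wdw W f K v S \<phi> \<mu> E \<beta> vt St pt mt s t)))"
    using assms(13) unfolding EV_solution_def .
  define W where "W = (\<lambda>y. Wdw y + (if sg then Wsg else (\<lambda>_. 0)) y)"
  note sol' = sol[unfolded Let_def, folded W_def]
  have aeW: "AE p in lebesgue_on (\<Omega> \<times> tint T). ?dW (\<phi> (fst p) (snd p)) (\<beta> (fst p) (snd p))"
    using sol' by (elim conjE)
  have T13: "\<forall>vt St pt mt. test_ST_div \<Omega> T vt \<and> test_ST_symTr \<Omega> T St \<and> test_ST \<Omega> T pt \<and> test_ST \<Omega> T mt \<longrightarrow>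
        (\<exists>N. N \<in> null_sets lebesgue \<and>
           (\<forall>s t. s \<in> {0} \<union> (tint T - N) \<and> t \<in> tint T - N \<and> s < t \<longrightarrow>
              EV_ineq \<Omega> \<gamma> \<rho>1 \<rho>2 \<nu> \<eta> m P Wdw W f K v S \<phi> \<mu> E \<beta> vt St pt mt s t))"
    using sol' by (elim conjE)
  have tests: "\<forall>mt. test_ST \<Omega> T mt \<longrightarrow> (\<exists>N. N \<in> null_sets lebesgue \<and>
           (\<forall>s t. s \<in> {0} \<union> (tint T - N) \<and> t \<in> tint T - N \<and> s < t \<longrightarrow>
              EV_ineq \<Omega> \<gamma> \<rho>1 \<rho>2 \<nu> \<eta> m P Wdw W f K v S \<phi> \<mu> E \<beta> (\<lambda>x t. 0) (\<lambda>x t. 0) (\<lambda>x t. 0) mt s t))"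
  proof (intro allI impI)
    fix mt :: "real^3 \<Rightarrow> real \<Rightarrow> real" assume tm: "test_ST \<Omega> T mt"
    have c: "test_ST_div \<Omega> T (\<lambda>x t. 0) \<and> test_ST_symTr \<Omega> T (\<lambda>x t. 0) \<and> test_ST \<Omega> T (\<lambda>x t. 0) \<and> test_ST \<Omega> T mt"
      using tm by (intro conjI test_ST_div_zero test_ST_symTr_zero test_ST_zero)
    note imp = spec[OF spec[OF spec[OF spec[OF T13, of "\<lambda>x t. 0"], of "\<lambda>x t. 0"], of "\<lambda>x t. 0"], of mt]
    show "\<exists>N. N \<in> null_sets lebesgue \<and>
           (\<forall>s t. s \<in> {0} \<union> (tint T - N) \<and> t \<in> tint T - N \<and> s < t \<longrightarrow>
              EV_ineq \<Omega> \<gamma> \<rho>1 \<rho>2 \<nu> \<eta> m P Wdw W f K v S \<phi> \<mu> E \<beta> (\<lambda>x t. 0) (\<lambda>x t. 0) (\<lambda>x t. 0) mt s t)"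
      by (rule mp[OF imp c])
  qed
  have P0: "\<forall>x\<in>\<Omega>. \<forall>y. P x y 0 = 0" using assms(7) unfolding assm_A4_def by (elim conjE)
  have Uo: "open ?U"
  proof -
    have "?U = \<Omega> \<times> {t::real. 0 < t \<and> ereal t < T}" by auto
    moreover have "open {t::real. 0 < t \<and> ereal t < T}"
      by (cases T) (auto simp: open_Collect_less open_Collect_conj)
    ultimately show ?thesis using \<Omega>o by (simp add: open_Times)
  qed
  have AEU: "AE p in lebesgue. p \<in> ?U \<longrightarrow> gfun \<Omega> Wdw \<phi> \<mu> \<beta> p = 0"
  proof (rule fundamental[OF _ Uo])
    fix mm c d
    assume a1: "mm \<in> alg Gq" and a2: "\<And>p. p \<notin> box c d \<Longrightarrow> mm p = 0" and a3: "cbox c d \<subseteq> ?U"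
    show "integrable lebesgue (\<lambda>p. gfun \<Omega> Wdw \<phi> \<mu> \<beta> p * mm p) \<and> (\<integral>p. gfun \<Omega> Wdw \<phi> \<mu> \<beta> p * mm p \<partial>lebesgue) = 0"
      by (rule key_lemma[OF \<Omega>o tests assms(12) P0 a1 a2 a3])
  qed
  have S1: "(\<Omega> \<times> tint T) \<inter> space lebesgue \<in> sets lebesgue"
    using Omega_times_sets[OF \<Omega>o tint_borel] by simp
  have AE1: "AE p in lebesgue_on (\<Omega> \<times> tint T). p \<in> ?U \<longrightarrow> gfun \<Omega> Wdw \<phi> \<mu> \<beta> p = 0"
    unfolding AE_restrict_space_iff[OF S1] using AEU by (rule eventually_mono) auto
  have b01: "(0::real^3, 1::real) \<in> Basis" by (simp add: Basis_prod_def)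
  have "negligible {p::(real^3) \<times> real. p \<bullet> (0,1) = 0}"
    by (rule negligible_standard_hyperplane[OF b01])
  then have "{p::(real^3) \<times> real. p \<bullet> (0,1) = 0} \<in> null_sets lebesgue"
    by (simp add: negligible_iff_null_sets)
  then have "AE p in lebesgue. p \<notin> {p::(real^3) \<times> real. p \<bullet> (0,1) = 0}" by (rule AE_not_in)
  moreover have "\<And>p::(real^3) \<times> real. p \<bullet> (0,1) = snd p" by (simp add: inner_prod_def)
  ultimately have "AE p in lebesgue. snd (p::(real^3) \<times> real) \<noteq> 0"
    by simp
  then have AE2: "AE p in lebesgue_on (\<Omega> \<times> tint T). snd p \<noteq> 0"
    unfolding AE_restrict_space_iff[OF S1] by (rule eventually_mono) auto
  have AE3: "AE p in lebesgue_on (\<Omega> \<times> tint T). p \<in> \<Omega> \<times> tint T"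
    unfolding AE_restrict_space_iff[OF S1] by simp
  show ?thesis using AE1 AE2 AE3 aeW
  proof eventually_elim
    case (elim p)
    then have "p \<in> ?U" by (auto simp: tint_def)
    then have "gfun \<Omega> Wdw \<phi> \<mu> \<beta> p = 0" using elim by blast
    then show ?case using elim(4) unfolding gfun_def by simp
  qed
qed

end
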